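(* Let $R$ be a subring of a ring $S$, and assume that every semiprime factor ring of $R$ and of $S$ is left or right Goldie and that the prime radical of every factor ring of $R$ and of $S$ is nilpotent. Then $\lambda$ is a left adjoint to $\rho$ if and only if for all $P\in\operatorname{Spec} S$ and $Q\in\operatorname{Spec} R$, $Q^S\subseteq P$ implies $Q\subseteq\sqrt{P\cap R}$.
   Context: $\operatorname{Spec}$ carries the Zariski topology, closed sets $V_A(X)=\{P\in\operatorname{Spec} A:P\supseteq X\}$; for $U\subseteq\operatorname{Spec} A$, $I(U)$ is the intersection of the primes in $U$; $\sqrt{K}$ is the prime radical of an ideal $K$. For an ideal $I$ of $R$, $I^S=\operatorname{ann}_S(S/SI)$. The functor $\lambda$ sends a closed $V\subseteq\operatorname{Spec} S$ to $V_R(I(V)\cap R)$; the functor $\rho$ sends a closed $V\subseteq\operatorname{Spec} R$ to $V_S(I(V)^S)$. "$\lambda$ is a left adjoint to $\rho$" means $\lambda U\subseteq V\iff U\subseteq\rho V$ for all closed $U\subseteq\operatorname{Spec} S$, $V\subseteq\operatorname{Spec} R$. *)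

theory Defs
  imports "HOL-Algebra.Algebra"
begin

definition nc_prime :: "('a, 'b) ring_scheme \<Rightarrow> 'a set \<Rightarrow> bool" where
  "nc_prime A P \<longleftrightarrow> ideal P A \<and> P \<noteq> carrier A \<and>
     (\<forall>I J. ideal I A \<longrightarrow> ideal J A \<longrightarrow>
        (\<forall>a\<in>I. \<forall>b\<in>J. a \<otimes>\<^bsub>A\<^esub> b \<in> P) \<longrightarrow> I \<subseteq> P \<or> J \<subseteq> P)"

definition Spec :: "('a, 'b) ring_scheme \<Rightarrow> 'a set set" where
  "Spec A = {P. nc_prime A P}"

definition Vz :: "('a, 'b) ring_scheme \<Rightarrow> 'a set \<Rightarrow> 'a set set" where
  "Vz A Y = {P. P \<in> Spec A \<and> Y \<subseteq> P}"

definition zariski_closed :: "('a, 'b) ring_scheme \<Rightarrow> 'a set set \<Rightarrow> bool" where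
  "zariski_closed A V \<longleftrightarrow> (\<exists>Y. Y \<subseteq> carrier A \<and> V = Vz A Y)"

definition Iz :: "('a, 'b) ring_scheme \<Rightarrow> 'a set set \<Rightarrow> 'a set" where
  "Iz A U = carrier A \<inter> \<Inter> U"

definition prad :: "('a, 'b) ring_scheme \<Rightarrow> 'a set \<Rightarrow> 'a set" where
  "prad A K = Iz A (Vz A K)"

definition prime_radical :: "('a, 'b) ring_scheme \<Rightarrow> 'a set" where
  "prime_radical A = prad A {\<zero>\<^bsub>A\<^esub>}"

definition semiprime_ring :: "('a, 'b) ring_scheme \<Rightarrow> bool" where
  "semiprime_ring A \<longleftrightarrow> (\<forall>I. ideal I A \<longrightarrow>
      (\<forall>a\<in>I. \<forall>b\<in>I. a \<otimes>\<^bsub>A\<^esub> b = \<zero>\<^bsub>A\<^esub>) \<longrightarrow> I = {\<zero>\<^bsub>A\<^esub>})"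

definition nilpotent_set :: "('a, 'b) ring_scheme \<Rightarrow> 'a set \<Rightarrow> bool" where
  "nilpotent_set A N \<longleftrightarrow> (\<exists>n::nat. \<forall>xs. length xs = n \<longrightarrow> set xs \<subseteq> N \<longrightarrow>
      foldr (\<lambda>x y. x \<otimes>\<^bsub>A\<^esub> y) xs \<one>\<^bsub>A\<^esub> = \<zero>\<^bsub>A\<^esub>)"

definition left_ideal :: "('a, 'b) ring_scheme \<Rightarrow> 'a set \<Rightarrow> bool" where
  "left_ideal A L \<longleftrightarrow> additive_subgroup L A \<and>
     (\<forall>r\<in>carrier A. \<forall>x\<in>L. r \<otimes>\<^bsub>A\<^esub> x \<in> L)"

definition right_ideal :: "('a, 'b) ring_scheme \<Rightarrow> 'a set \<Rightarrow> bool" where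
  "right_ideal A L \<longleftrightarrow> additive_subgroup L A \<and>
     (\<forall>r\<in>carrier A. \<forall>x\<in>L. x \<otimes>\<^bsub>A\<^esub> r \<in> L)"

definition lann :: "('a, 'b) ring_scheme \<Rightarrow> 'a set \<Rightarrow> 'a set" where
  "lann A Y = {a \<in> carrier A. \<forall>x\<in>Y. a \<otimes>\<^bsub>A\<^esub> x = \<zero>\<^bsub>A\<^esub>}"

definition rann :: "('a, 'b) ring_scheme \<Rightarrow> 'a set \<Rightarrow> 'a set" where
  "rann A Y = {a \<in> carrier A. \<forall>x\<in>Y. x \<otimes>\<^bsub>A\<^esub> a = \<zero>\<^bsub>A\<^esub>}"

definition independent_seq :: "('a, 'b) ring_scheme \<Rightarrow> (nat \<Rightarrow> 'a set) \<Rightarrow> bool" where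
  "independent_seq A L \<longleftrightarrow> (\<forall>n x. (\<forall>i\<le>n. x i \<in> L i) \<longrightarrow>
      finsum A x {..n} = \<zero>\<^bsub>A\<^esub> \<longrightarrow> (\<forall>i\<le>n. x i = \<zero>\<^bsub>A\<^esub>))"

text \<open>Left Goldie: ACC on left annihilators and finite left uniform dimension
(no infinite direct sum of nonzero left ideals); right Goldie symmetric.\<close>
definition left_goldie :: "('a, 'b) ring_scheme \<Rightarrow> bool" where
  "left_goldie A \<longleftrightarrow>
     \<not> (\<exists>Y::nat \<Rightarrow> 'a set. (\<forall>n. Y n \<subseteq> carrier A \<and> lann A (Y n) \<subset> lann A (Y (Suc n)))) \<and>
     \<not> (\<exists>L::nat \<Rightarrow> 'a set. (\<forall>n. left_ideal A (L n) \<and> L n \<noteq> {\<zero>\<^bsub>A\<^esub>}) \<and> independent_seq A L)"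

definition right_goldie :: "('a, 'b) ring_scheme \<Rightarrow> bool" where
  "right_goldie A \<longleftrightarrow>
     \<not> (\<exists>Y::nat \<Rightarrow> 'a set. (\<forall>n. Y n \<subseteq> carrier A \<and> rann A (Y n) \<subset> rann A (Y (Suc n)))) \<and>
     \<not> (\<exists>L::nat \<Rightarrow> 'a set. (\<forall>n. right_ideal A (L n) \<and> L n \<noteq> {\<zero>\<^bsub>A\<^esub>}) \<and> independent_seq A L)"

definition goldie_hyp :: "('a, 'b) ring_scheme \<Rightarrow> bool" where
  "goldie_hyp A \<longleftrightarrow> (\<forall>I. ideal I A \<longrightarrow>
      (semiprime_ring (A Quot I) \<longrightarrow> left_goldie (A Quot I) \<or> right_goldie (A Quot I)) \<and>
      nilpotent_set (A Quot I) (prime_radical (A Quot I)))"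

definition left_gen :: "('a, 'b) ring_scheme \<Rightarrow> 'a set \<Rightarrow> 'a set" where
  "left_gen S I = {finsum S (\<lambda>k. s k \<otimes>\<^bsub>S\<^esub> x k) {..<(n::nat)} | n s x.
      s \<in> {..<n} \<rightarrow> carrier S \<and> x \<in> {..<n} \<rightarrow> I}"

text \<open>I^S = ann_S(S/SI).\<close>
definition extS :: "('a, 'b) ring_scheme \<Rightarrow> 'a set \<Rightarrow> 'a set" where
  "extS S I = {s \<in> carrier S. \<forall>t\<in>carrier S. s \<otimes>\<^bsub>S\<^esub> t \<in> left_gen S I}"

definition lam :: "('a, 'b) ring_scheme \<Rightarrow> 'a set \<Rightarrow> 'a set set \<Rightarrow> 'a set set" where
  "lam S R U = Vz (S\<lparr>carrier := R\<rparr>) (Iz S U \<inter> R)"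

definition rho :: "('a, 'b) ring_scheme \<Rightarrow> 'a set \<Rightarrow> 'a set set \<Rightarrow> 'a set set" where
  "rho S R V = Vz S (extS S (Iz (S\<lparr>carrier := R\<rparr>) V))"

end

theory Submission
  imports Defs
begin

lemma (in ring) addsub_by_closure:
  assumes "I \<subseteq> carrier R" "\<zero> \<in> I" "\<And>a b. a \<in> I \<Longrightarrow> b \<in> I \<Longrightarrow> a \<oplus> b \<in> I"
    "\<And>a. a \<in> I \<Longrightarrow> \<ominus> a \<in> I"
  shows "additive_subgroup I R"
  unfolding additive_subgroup_def
  apply (rule subgroup.intro)
  using assms by (auto simp: a_inv_def[symmetric])

lemma (in ring) ideal_by_closure:
  assumes "I \<subseteq> carrier R" "\<zero> \<in> I" "\<And>a b. a \<in> I \<Longrightarrow> b \<in> I \<Longrightarrow> a \<oplus> b \<in> I"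
    "\<And>a x. a \<in> I \<Longrightarrow> x \<in> carrier R \<Longrightarrow> x \<otimes> a \<in> I"
    "\<And>a x. a \<in> I \<Longrightarrow> x \<in> carrier R \<Longrightarrow> a \<otimes> x \<in> I"
  shows "ideal I R"
proof -
  have neg: "\<ominus> a \<in> I" if "a \<in> I" for a
  proof -
    have "\<ominus> a = (\<ominus> \<one>) \<otimes> a" using that assms(1) by (simp add: l_minus subsetD)
    thus ?thesis using assms(4) that by simp
  qed
  show ?thesis
    apply (rule idealI[OF ring_axioms])
    using addsub_by_closure[OF assms(1-3) neg] unfolding additive_subgroup_def apply simp
    using assms by auto
qed

lemma (in ring) ideal_Inter_carrier:
  assumes "\<And>I. I \<in> F \<Longrightarrow> ideal I R"
  shows "ideal (carrier R \<inter> \<Inter>F) R"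
proof (cases "F = {}")
  case True thus ?thesis using oneideal by simp
next
  case False
  have "carrier R \<inter> \<Inter>F = \<Inter>F" using False assms ideal.Icarr by fastforce
  thus ?thesis using i_Intersect[OF assms False] by simp
qed

lemma (in ring) Spec_ideal: "P \<in> Spec R \<Longrightarrow> ideal P R"
  by (simp add: Spec_def nc_prime_def)

lemma (in ring) Spec_ne: "P \<in> Spec R \<Longrightarrow> \<one> \<notin> P"
proof
  assume a: "P \<in> Spec R" "\<one> \<in> P"
  hence "P = carrier R" using Spec_ideal ideal.one_imp_carrier by metis
  thus False using a(1) unfolding Spec_def nc_prime_def by simp
qed

lemma (in ring) Spec_prime:
  assumes "P \<in> Spec R" "ideal I R" "ideal J R" "\<And>a b. a \<in> I \<Longrightarrow> b \<in> J \<Longrightarrow> a \<otimes> b \<in> P"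
  shows "I \<subseteq> P \<or> J \<subseteq> P"
  using assms unfolding Spec_def nc_prime_def by blast

lemma (in ring) prime_finite_Inter:
  assumes P: "P \<in> Spec R" and fin: "finite F" and ids: "\<And>I. I \<in> F \<Longrightarrow> ideal I R"
    and sub: "carrier R \<inter> \<Inter>F \<subseteq> P"
  shows "\<exists>I\<in>F. I \<subseteq> P"
  using fin ids sub
proof (induction F rule: finite_induct)
  case empty
  thus ?case using Spec_ne[OF P] by auto
next
  case (insert I F)
  let ?K = "carrier R \<inter> \<Inter>F"
  have K: "ideal ?K R" using ideal_Inter_carrier insert by auto
  have I: "ideal I R" using insert by auto
  have "I \<subseteq> P \<or> ?K \<subseteq> P"
  proof (rule Spec_prime[OF P I K])
    fix a b assume "a \<in> I" "b \<in> ?K"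
    moreover have "a \<in> carrier R" "b \<in> carrier R" using calculation I K ideal.Icarr by auto
    ultimately have "a \<otimes> b \<in> I" "a \<otimes> b \<in> ?K"
      using ideal.I_r_closed[OF I] ideal.I_l_closed[OF K] by auto
    thus "a \<otimes> b \<in> P" using insert.prems(2) by auto
  qed
  thus ?case using insert by auto
qed

lemma (in ring) prad_ideal: "ideal J R \<Longrightarrow> ideal (prad R J) R"
  unfolding prad_def Iz_def by (rule ideal_Inter_carrier) (auto simp: Vz_def Spec_ideal)

lemma (in ring) prad_sup: "ideal J R \<Longrightarrow> J \<subseteq> prad R J"
  unfolding prad_def Iz_def Vz_def using ideal.Icarr[of J R] by auto

lemma (in ring) prad_sub: "P \<in> Spec R \<Longrightarrow> J \<subseteq> P \<Longrightarrow> prad R J \<subseteq> P"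
  unfolding prad_def Iz_def Vz_def by blast


definition annL :: "('a, 'b) ring_scheme \<Rightarrow> 'a set \<Rightarrow> 'a set \<Rightarrow> 'a set" where
  "annL A M Y = {a \<in> carrier A. \<forall>x\<in>Y. a \<otimes>\<^bsub>A\<^esub> x \<in> M}"

definition annR :: "('a, 'b) ring_scheme \<Rightarrow> 'a set \<Rightarrow> 'a set \<Rightarrow> 'a set" where
  "annR A M Y = {a \<in> carrier A. \<forall>x\<in>Y. x \<otimes>\<^bsub>A\<^esub> a \<in> M}"

definition sprime :: "('a, 'b) ring_scheme \<Rightarrow> 'a set \<Rightarrow> bool" where
  "sprime A M \<longleftrightarrow> ideal M A \<and> (\<forall>K. ideal K A \<longrightarrow> (\<forall>a\<in>K. \<forall>b\<in>K. a \<otimes>\<^bsub>A\<^esub> b \<in> M) \<longrightarrow> K \<subseteq> M)"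

definition accN :: "('a, 'b) ring_scheme \<Rightarrow> 'a set \<Rightarrow> bool" where
  "accN A M \<longleftrightarrow> \<not> (\<exists>I::nat \<Rightarrow> 'a set. \<forall>n. ideal (I n) A \<and> annL A M (I n) \<subset> annL A M (I (Suc n)))"

context ring
begin

lemma sprimeD:
  assumes "sprime R N" "ideal K R" "\<And>a b. a \<in> K \<Longrightarrow> b \<in> K \<Longrightarrow> a \<otimes> b \<in> N"
  shows "K \<subseteq> N"
proof -
  have "\<forall>K. ideal K R \<longrightarrow> (\<forall>a\<in>K. \<forall>b\<in>K. a \<otimes> b \<in> N) \<longrightarrow> K \<subseteq> N"
    using assms(1) unfolding sprime_def by simp
  thus ?thesis using assms(2,3) by simp
qed

lemma sprime_ideal: "sprime R N \<Longrightarrow> ideal N R"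
  unfolding sprime_def by simp

lemma prad_sprime: assumes "ideal J R" shows "sprime R (prad R J)"
  unfolding sprime_def
proof (intro conjI allI impI)
  show "ideal (prad R J) R" using prad_ideal[OF assms] .
  fix K assume K: "ideal K R" and prod: "\<forall>a\<in>K. \<forall>b\<in>K. a \<otimes> b \<in> prad R J"
  have "K \<subseteq> P" if P: "P \<in> Spec R" "J \<subseteq> P" for P
  proof -
    have "\<forall>a\<in>K. \<forall>b\<in>K. a \<otimes> b \<in> P" using prod prad_sub[OF P] by blast
    thus ?thesis using Spec_prime[OF P(1) K K] by blast
  qed
  moreover have "K \<subseteq> carrier R" using ideal.Icarr[OF K] by blast
  ultimately show "K \<subseteq> prad R J" unfolding prad_def Iz_def Vz_def by blast
qed

lemma sprime_elem:
  assumes sp: "sprime R N" and a: "a \<in> carrier R" and h: "\<And>r. r \<in> carrier R \<Longrightarrow> a \<otimes> r \<otimes> a \<in> N"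
  shows "a \<in> N"
proof -
  have N: "ideal N R" using sprime_ideal[OF sp] .
  define N1 where "N1 = {y \<in> carrier R. \<forall>u\<in>carrier R. a \<otimes> u \<otimes> y \<in> N}"
  have N1: "ideal N1 R"
  proof (rule ideal_by_closure)
    show "N1 \<subseteq> carrier R" unfolding N1_def by blast
    show "\<zero> \<in> N1" unfolding N1_def using a additive_subgroup.zero_closed[OF ideal.axioms(1)[OF N]] by simp
    fix x y assume "x \<in> N1" "y \<in> N1"
    thus "x \<oplus> y \<in> N1" unfolding N1_def using a
      by (auto simp: r_distr intro!: additive_subgroup.a_closed[OF ideal.axioms(1)[OF N]])
  next
    fix x y assume x: "x \<in> N1" and y: "y \<in> carrier R"
    show "y \<otimes> x \<in> N1" unfolding N1_def
    proof (intro CollectI conjI ballI)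
      show "y \<otimes> x \<in> carrier R" using x y N1_def by auto
      fix u assume u: "u \<in> carrier R"
      have "a \<otimes> u \<otimes> (y \<otimes> x) = a \<otimes> (u \<otimes> y) \<otimes> x" using a u y x N1_def by (auto simp: m_assoc)
      thus "a \<otimes> u \<otimes> (y \<otimes> x) \<in> N" using x u y N1_def by auto
    qed
    show "x \<otimes> y \<in> N1" unfolding N1_def
    proof (intro CollectI conjI ballI)
      show "x \<otimes> y \<in> carrier R" using x y N1_def by auto
      fix u assume u: "u \<in> carrier R"
      have "a \<otimes> u \<otimes> (x \<otimes> y) = (a \<otimes> u \<otimes> x) \<otimes> y" using a u y x N1_def by (auto simp: m_assoc)
      thus "a \<otimes> u \<otimes> (x \<otimes> y) \<in> N" using x u y N1_def ideal.I_r_closed[OF N] by auto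
    qed
  qed
  have aN1: "a \<in> N1" unfolding N1_def using a h by auto
  define K where "K = Idl {a}"
  have K: "ideal K R" unfolding K_def using genideal_ideal a by simp
  have KN1: "K \<subseteq> N1" unfolding K_def using genideal_minimal[OF N1] aN1 by simp
  define M where "M = {y \<in> carrier R. \<forall>z\<in>K. y \<otimes> z \<in> N}"
  have M: "ideal M R"
  proof (rule ideal_by_closure)
    show "M \<subseteq> carrier R" unfolding M_def by blast
    show "\<zero> \<in> M" unfolding M_def using ideal.Icarr[OF K] additive_subgroup.zero_closed[OF ideal.axioms(1)[OF N]] by auto
    fix x y assume "x \<in> M" "y \<in> M"
    thus "x \<oplus> y \<in> M" unfolding M_def using ideal.Icarr[OF K]
      by (auto simp: l_distr intro!: additive_subgroup.a_closed[OF ideal.axioms(1)[OF N]])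
  next
    fix x y assume x: "x \<in> M" and y: "y \<in> carrier R"
    show "y \<otimes> x \<in> M" unfolding M_def
    proof (intro CollectI conjI ballI)
      show "y \<otimes> x \<in> carrier R" using x y M_def by auto
      fix z assume z: "z \<in> K"
      have "y \<otimes> x \<otimes> z = y \<otimes> (x \<otimes> z)" using z y x M_def ideal.Icarr[OF K] by (auto simp: m_assoc)
      thus "y \<otimes> x \<otimes> z \<in> N" using x z y M_def ideal.I_l_closed[OF N] by auto
    qed
    show "x \<otimes> y \<in> M" unfolding M_def
    proof (intro CollectI conjI ballI)
      show "x \<otimes> y \<in> carrier R" using x y M_def by auto
      fix z assume z: "z \<in> K"
      have "x \<otimes> y \<otimes> z = x \<otimes> (y \<otimes> z)" using z y x M_def ideal.Icarr[OF K] by (auto simp: m_assoc)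
      moreover have "y \<otimes> z \<in> K" using ideal.I_l_closed[OF K z y] .
      ultimately show "x \<otimes> y \<otimes> z \<in> N" using x M_def by auto
    qed
  qed
  have aM: "a \<in> M" unfolding M_def
  proof (intro CollectI conjI ballI)
    show "a \<in> carrier R" by fact
    fix z assume "z \<in> K"
    hence "z \<in> N1" using KN1 by blast
    hence "a \<otimes> \<one> \<otimes> z \<in> N" unfolding N1_def by auto
    thus "a \<otimes> z \<in> N" using a by simp
  qed
  have KM: "K \<subseteq> M" unfolding K_def using genideal_minimal[OF M] aM by simp
  have "K \<subseteq> N"
  proof (rule sprimeD[OF sp K])
    fix x y assume "x \<in> K" "y \<in> K"
    thus "x \<otimes> y \<in> N" using KM unfolding M_def by auto
  qed
  moreover have "a \<in> K" unfolding K_def using genideal_self' a by simp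
  ultimately show ?thesis by blast
qed

lemma annL_eq_annR:
  assumes sp: "sprime R N" and I: "ideal I R"
  shows "annL R N I = annR R N I"
proof -
  have N: "ideal N R" using sprime_ideal[OF sp] .
  have Ic: "\<And>i. i \<in> I \<Longrightarrow> i \<in> carrier R" using ideal.Icarr[OF I] by blast
  have 1: "i \<otimes> x \<in> N" if x: "x \<in> annL R N I" and i: "i \<in> I" for x i
  proof (rule sprime_elem[OF sp])
    from x have xc: "x \<in> carrier R" and xa: "\<forall>y\<in>I. x \<otimes> y \<in> N" by (simp_all add: annL_def)
    show "i \<otimes> x \<in> carrier R" using xc Ic[OF i] by simp
    fix r assume r: "r \<in> carrier R"
    have eq: "i \<otimes> x \<otimes> r \<otimes> (i \<otimes> x) = i \<otimes> (x \<otimes> (r \<otimes> i)) \<otimes> x"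
      using xc Ic[OF i] r by (simp add: m_assoc)
    have n: "x \<otimes> (r \<otimes> i) \<in> N" using xa ideal.I_l_closed[OF I i r] by blast
    have "i \<otimes> (x \<otimes> (r \<otimes> i)) \<in> N" using ideal.I_l_closed[OF N n Ic[OF i]] .
    hence "i \<otimes> (x \<otimes> (r \<otimes> i)) \<otimes> x \<in> N" using ideal.I_r_closed[OF N _ xc] by blast
    thus "i \<otimes> x \<otimes> r \<otimes> (i \<otimes> x) \<in> N" unfolding eq .
  qed
  have 2: "x \<otimes> i \<in> N" if x: "x \<in> annR R N I" and i: "i \<in> I" for x i
  proof (rule sprime_elem[OF sp])
    from x have xc: "x \<in> carrier R" and xa: "\<forall>y\<in>I. y \<otimes> x \<in> N" by (simp_all add: annR_def)
    show "x \<otimes> i \<in> carrier R" using xc Ic[OF i] by simp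
    fix r assume r: "r \<in> carrier R"
    have eq: "x \<otimes> i \<otimes> r \<otimes> (x \<otimes> i) = x \<otimes> ((i \<otimes> r) \<otimes> x) \<otimes> i"
      using xc Ic[OF i] r by (simp add: m_assoc)
    have n: "(i \<otimes> r) \<otimes> x \<in> N" using xa ideal.I_r_closed[OF I i r] by blast
    have "x \<otimes> ((i \<otimes> r) \<otimes> x) \<in> N" using ideal.I_l_closed[OF N n xc] .
    hence "x \<otimes> ((i \<otimes> r) \<otimes> x) \<otimes> i \<in> N" using ideal.I_r_closed[OF N _ Ic[OF i]] by blast
    thus "x \<otimes> i \<otimes> r \<otimes> (x \<otimes> i) \<in> N" unfolding eq .
  qed
  show ?thesis
  proof
    show "annL R N I \<subseteq> annR R N I"
    proof
      fix x assume "x \<in> annL R N I"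
      thus "x \<in> annR R N I" using 1 unfolding annR_def annL_def[of R N I] by blast
    qed
    show "annR R N I \<subseteq> annL R N I"
    proof
      fix x assume "x \<in> annR R N I"
      thus "x \<in> annL R N I" using 2 unfolding annL_def annR_def[of R N I] by blast
    qed
  qed
qed

lemma annL_mem: "x \<in> annL R N I \<longleftrightarrow> x \<in> carrier R \<and> (\<forall>y\<in>I. x \<otimes> y \<in> N)"
  by (simp add: annL_def)

lemma annR_mem: "x \<in> annR R N I \<longleftrightarrow> x \<in> carrier R \<and> (\<forall>y\<in>I. y \<otimes> x \<in> N)"
  by (simp add: annR_def)

lemma annL_ideal:
  assumes N: "ideal N R" and I: "ideal I R"
  shows "ideal (annL R N I) R"
proof (rule ideal_by_closure)
  have Ic: "\<And>i. i \<in> I \<Longrightarrow> i \<in> carrier R" using ideal.Icarr[OF I] by blast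
  have N0: "\<zero> \<in> N" using additive_subgroup.zero_closed[OF ideal.axioms(1)[OF N]] .
  have Nadd: "\<And>a b. a \<in> N \<Longrightarrow> b \<in> N \<Longrightarrow> a \<oplus> b \<in> N"
    using additive_subgroup.a_closed[OF ideal.axioms(1)[OF N]] .
  show "annL R N I \<subseteq> carrier R" by (auto simp: annL_mem)
  show "\<zero> \<in> annL R N I" unfolding annL_mem using Ic N0 by simp
  fix x y assume x: "x \<in> annL R N I" and y: "y \<in> annL R N I"
  show "x \<oplus> y \<in> annL R N I" unfolding annL_mem
  proof (intro conjI ballI)
    show "x \<oplus> y \<in> carrier R" using x y by (simp add: annL_mem)
    fix z assume z: "z \<in> I"
    have "(x \<oplus> y) \<otimes> z = x \<otimes> z \<oplus> y \<otimes> z" using x y Ic[OF z] by (simp add: annL_mem l_distr)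
    thus "(x \<oplus> y) \<otimes> z \<in> N" using x y z Nadd by (simp add: annL_mem)
  qed
next
  have Ic: "\<And>i. i \<in> I \<Longrightarrow> i \<in> carrier R" using ideal.Icarr[OF I] by blast
  fix x y assume x: "x \<in> annL R N I" and y: "y \<in> carrier R"
  from x have xc: "x \<in> carrier R" and xa: "\<forall>z\<in>I. x \<otimes> z \<in> N" by (simp_all add: annL_mem)
  show "y \<otimes> x \<in> annL R N I" unfolding annL_mem
  proof (intro conjI ballI)
    show "y \<otimes> x \<in> carrier R" using xc y by simp
    fix z assume z: "z \<in> I"
    have "y \<otimes> x \<otimes> z = y \<otimes> (x \<otimes> z)" using xc y Ic[OF z] by (simp add: m_assoc)
    thus "y \<otimes> x \<otimes> z \<in> N" using xa z ideal.I_l_closed[OF N _ y] by simp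
  qed
  show "x \<otimes> y \<in> annL R N I" unfolding annL_mem
  proof (intro conjI ballI)
    show "x \<otimes> y \<in> carrier R" using xc y by simp
    fix z assume z: "z \<in> I"
    have "x \<otimes> y \<otimes> z = x \<otimes> (y \<otimes> z)" using xc y Ic[OF z] by (simp add: m_assoc)
    moreover have "y \<otimes> z \<in> I" using ideal.I_l_closed[OF I z y] .
    ultimately show "x \<otimes> y \<otimes> z \<in> N" using xa by simp
  qed
qed

lemma annL_inter:
  assumes sp: "sprime R N" and I: "ideal I R"
  shows "annL R N I \<inter> I \<subseteq> N"
proof
  fix y assume y: "y \<in> annL R N I \<inter> I"
  from y have yc: "y \<in> carrier R" and ya: "\<forall>z\<in>I. y \<otimes> z \<in> N" and yI: "y \<in> I"
    by (simp_all add: annL_mem)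
  show "y \<in> N"
  proof (rule sprime_elem[OF sp yc])
    fix r assume r: "r \<in> carrier R"
    have "y \<otimes> r \<otimes> y = y \<otimes> (r \<otimes> y)" using yc r by (simp add: m_assoc)
    moreover have "r \<otimes> y \<in> I" using ideal.I_l_closed[OF I yI r] .
    ultimately show "y \<otimes> r \<otimes> y \<in> N" using ya by simp
  qed
qed

lemma annL_anti: "U \<subseteq> V \<Longrightarrow> annL R N V \<subseteq> annL R N U"
  unfolding annL_def by blast

end


context ring
begin

lemma acc_max:
  assumes acc: "accN R N" and F: "\<And>I. I \<in> \<F> \<Longrightarrow> ideal I R" and I0: "I0 \<in> \<F>"
  obtains I where "I \<in> \<F>" "\<And>I'. I' \<in> \<F> \<Longrightarrow> annL R N I \<subseteq> annL R N I' \<Longrightarrow> annL R N I' = annL R N I"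
proof -
  define r where "r = {(I', I). I \<in> \<F> \<and> I' \<in> \<F> \<and> annL R N I \<subset> annL R N I'}"
  have "wf r"
    unfolding wf_iff_no_infinite_down_chain
  proof
    assume "\<exists>f. \<forall>i. (f (Suc i), f i) \<in> r"
    then obtain f where f: "\<And>i. (f (Suc i), f i) \<in> r" by blast
    have "\<forall>n. ideal (f n) R \<and> annL R N (f n) \<subset> annL R N (f (Suc n))"
    proof
      fix n
      from f[of n] have "f n \<in> \<F>" "annL R N (f n) \<subset> annL R N (f (Suc n))" unfolding r_def by simp_all
      thus "ideal (f n) R \<and> annL R N (f n) \<subset> annL R N (f (Suc n))" using F by simp
    qed
    thus False using acc unfolding accN_def by blast
  qed
  then obtain z where z: "z \<in> \<F>" and zmin: "\<And>y. (y, z) \<in> r \<Longrightarrow> y \<notin> \<F>"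
    using wfE_min I0 by metis
  show ?thesis
  proof (rule that[OF z])
    fix I' assume I': "I' \<in> \<F>" "annL R N z \<subseteq> annL R N I'"
    show "annL R N I' = annL R N z"
    proof (rule ccontr)
      assume "annL R N I' \<noteq> annL R N z"
      hence "(I', z) \<in> r" using I' z unfolding r_def by auto
      thus False using zmin I'(1) by blast
    qed
  qed
qed

lemma goldie_finite:
  assumes sp: "sprime R N" and acc: "accN R N"
  shows "\<exists>F. finite F \<and> F \<subseteq> Spec R \<and> (\<forall>P\<in>F. N \<subseteq> P) \<and> carrier R \<inter> \<Inter>F \<subseteq> N"
proof -
  have Nid: "ideal N R" using sprime_ideal[OF sp] .
  define \<F> where "\<F> = {carrier R \<inter> \<Inter>F | F. finite F \<and> F \<subseteq> Spec R \<and> (\<forall>P\<in>F. N \<subseteq> P)}"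
  have Fid: "ideal I R" if "I \<in> \<F>" for I
  proof -
    from that obtain F where "I = carrier R \<inter> \<Inter>F" "F \<subseteq> Spec R" unfolding \<F>_def by blast
    thus ?thesis using ideal_Inter_carrier[of F] Spec_ideal by blast
  qed
  have "carrier R \<inter> \<Inter>{} \<in> \<F>" unfolding \<F>_def by blast
  then obtain X0 where X0: "X0 \<in> \<F>"
    and X0max: "\<And>I'. I' \<in> \<F> \<Longrightarrow> annL R N X0 \<subseteq> annL R N I' \<Longrightarrow> annL R N I' = annL R N X0"
    using acc_max[OF acc Fid] by metis
  from X0 obtain F0 where F0: "X0 = carrier R \<inter> \<Inter>F0" "finite F0" "F0 \<subseteq> Spec R" "\<forall>P\<in>F0. N \<subseteq> P"
    unfolding \<F>_def by blast
  have X0id: "ideal X0 R" using Fid[OF X0] .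
  show ?thesis
  proof (cases "X0 \<subseteq> N")
    case True thus ?thesis using F0 by blast
  next
    case False
    define \<G> where "\<G> = {I. ideal I R \<and> I \<subseteq> X0 \<and> \<not> I \<subseteq> N}"
    have "X0 \<in> \<G>" unfolding \<G>_def using X0id False by blast
    then obtain I1 where I1: "I1 \<in> \<G>"
      and I1max: "\<And>I'. I' \<in> \<G> \<Longrightarrow> annL R N I1 \<subseteq> annL R N I' \<Longrightarrow> annL R N I' = annL R N I1"
      using acc_max[OF acc, of \<G>] unfolding \<G>_def by blast
    have I1id: "ideal I1 R" and I1X0: "I1 \<subseteq> X0" and I1N: "\<not> I1 \<subseteq> N" using I1 unfolding \<G>_def by auto
    have I1c: "\<And>i. i \<in> I1 \<Longrightarrow> i \<in> carrier R" using ideal.Icarr[OF I1id] by blast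
    define P where "P = annL R N I1"
    have Pid: "ideal P R" unfolding P_def using annL_ideal[OF Nid I1id] .
    have Pc: "\<And>x. x \<in> P \<Longrightarrow> x \<in> carrier R" using ideal.Icarr[OF Pid] by blast
    have PR: "P = annR R N I1" unfolding P_def using annL_eq_annR[OF sp I1id] .
    have NP: "N \<subseteq> P"
    proof
      fix x assume x: "x \<in> N"
      have "x \<in> carrier R" using ideal.Icarr[OF Nid x] .
      moreover have "\<forall>y\<in>I1. x \<otimes> y \<in> N" using ideal.I_r_closed[OF Nid x] I1c by blast
      ultimately show "x \<in> P" unfolding P_def annL_mem by blast
    qed
    have Pspec: "P \<in> Spec R"
      unfolding Spec_def nc_prime_def mem_Collect_eq
    proof (intro conjI allI impI)
      show "ideal P R" by fact
      show "P \<noteq> carrier R"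
      proof
        assume "P = carrier R"
        hence "\<one> \<in> P" by simp
        hence "\<forall>y\<in>I1. \<one> \<otimes> y \<in> N" unfolding P_def annL_mem by blast
        hence "I1 \<subseteq> N" using I1c by auto
        thus False using I1N by blast
      qed
      fix I J assume I: "ideal I R" and J: "ideal J R" and prod: "\<forall>a\<in>I. \<forall>b\<in>J. a \<otimes> b \<in> P"
      show "I \<subseteq> P \<or> J \<subseteq> P"
      proof (cases "J \<subseteq> P")
        case True thus ?thesis by blast
      next
        case False
        then obtain k where k: "k \<in> J" "k \<notin> P" by blast
        have kc: "k \<in> carrier R" using ideal.Icarr[OF J k(1)] .
        from k kc obtain i where i: "i \<in> I1" "k \<otimes> i \<notin> N" unfolding P_def annL_mem by blast
        define I' where "I' = J \<inter> I1"
        have I'id: "ideal I' R" unfolding I'_def using i_intersect[OF J I1id] .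
        have ki: "k \<otimes> i \<in> I'" unfolding I'_def
          using ideal.I_r_closed[OF J k(1) I1c[OF i(1)]] ideal.I_l_closed[OF I1id i(1) kc] by blast
        have "I' \<in> \<G>" unfolding \<G>_def using I'id I1X0 ki i(2) unfolding I'_def by blast
        moreover have "annL R N I1 \<subseteq> annL R N I'" unfolding I'_def by (rule annL_anti) blast
        ultimately have eq: "annL R N I' = P" using I1max unfolding P_def by blast
        have "I \<subseteq> annL R N I'"
        proof
          fix a assume a: "a \<in> I"
          have ac: "a \<in> carrier R" using ideal.Icarr[OF I a] .
          have "\<forall>y\<in>I'. a \<otimes> y \<in> N"
          proof
            fix y assume y: "y \<in> I'"
            hence yJ: "y \<in> J" and yI1: "y \<in> I1" unfolding I'_def by auto
            have "a \<otimes> y \<in> P" using prod a yJ by blast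
            moreover have "a \<otimes> y \<in> I1" using ideal.I_l_closed[OF I1id yI1 ac] .
            ultimately show "a \<otimes> y \<in> N" using annL_inter[OF sp I1id] unfolding P_def by blast
          qed
          thus "a \<in> annL R N I'" unfolding annL_mem using ac by blast
        qed
        thus ?thesis using eq by blast
      qed
    qed
    define X1 where "X1 = carrier R \<inter> \<Inter>(insert P F0)"
    have X1F: "X1 \<in> \<F>" unfolding \<F>_def X1_def using F0 Pspec NP by blast
    have X1eq: "X1 = X0 \<inter> P" unfolding X1_def F0(1) by blast
    have sub: "annL R N X0 \<subseteq> annL R N X1" by (rule annL_anti) (simp add: X1eq)
    have "I1 \<subseteq> annL R N X1"
    proof
      fix y assume y: "y \<in> I1"
      have "\<forall>x\<in>X1. y \<otimes> x \<in> N"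
      proof
        fix x assume "x \<in> X1"
        hence "x \<in> P" unfolding X1eq by blast
        thus "y \<otimes> x \<in> N" using y unfolding PR annR_mem by blast
      qed
      thus "y \<in> annL R N X1" unfolding annL_mem using I1c[OF y] by blast
    qed
    hence "I1 \<subseteq> annL R N X0" using X0max[OF X1F sub] by simp
    hence "I1 \<subseteq> annL R N X0 \<inter> X0" using I1X0 by blast
    hence "I1 \<subseteq> N" using annL_inter[OF sp X0id] by blast
    thus ?thesis using I1N by blast
  qed
qed

end


context ring
begin

lemma quot_carrier: "ideal N R \<Longrightarrow> carrier (R Quot N) = (+>) N ` carrier R"
  unfolding FactRing_def A_RCOSETS_def' by auto

lemma quot_mult: "ideal N R \<Longrightarrow> x \<in> carrier R \<Longrightarrow> y \<in> carrier R \<Longrightarrow>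
    (N +> x) \<otimes>\<^bsub>R Quot N\<^esub> (N +> y) = N +> (x \<otimes> y)"
  using ideal.rcoset_mult_add by (simp add: FactRing_def)

lemma quot_zero: "\<zero>\<^bsub>R Quot N\<^esub> = N"
  by (simp add: FactRing_def)

lemma quot_one: "\<one>\<^bsub>R Quot N\<^esub> = N +> \<one>"
  by (simp add: FactRing_def)

lemma ideal_absub: "ideal N R \<Longrightarrow> abelian_subgroup N R"
  using abelian_subgroupI3[OF ideal.axioms(1) is_abelian_group] by blast

lemma coset_eq_N:
  assumes N: "ideal N R" and x: "x \<in> carrier R"
  shows "N +> x = N \<longleftrightarrow> x \<in> N"
proof
  assume "N +> x = N"
  moreover have "x \<in> N +> x" using abelian_subgroup.a_rcos_self[OF ideal_absub[OF N] x] .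
  ultimately show "x \<in> N" by simp
next
  assume "x \<in> N" thus "N +> x = N" using abelian_subgroup.a_rcos_const[OF ideal_absub[OF N]] by blast
qed

lemma coset_rep:
  assumes N: "ideal N R" and x: "x \<in> carrier R" and y: "y \<in> carrier R" and eq: "N +> y = N +> x"
  shows "\<exists>h\<in>N. y = h \<oplus> x"
proof -
  have "y \<in> N +> x" using abelian_subgroup.a_rcos_self[OF ideal_absub[OF N] y] eq by simp
  thus ?thesis unfolding a_r_coset_def' by blast
qed

lemma img_lann:
  assumes N: "ideal N R" and I: "I \<subseteq> carrier R"
  shows "lann (R Quot N) ((+>) N ` I) = (+>) N ` annL R N I"
proof
  show "lann (R Quot N) ((+>) N ` I) \<subseteq> (+>) N ` annL R N I"
  proof
    fix C assume C: "C \<in> lann (R Quot N) ((+>) N ` I)"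
    hence "C \<in> carrier (R Quot N)" unfolding lann_def by blast
    then obtain x where x: "x \<in> carrier R" "C = N +> x" using quot_carrier[OF N] by blast
    have "x \<otimes> a \<in> N" if a: "a \<in> I" for a
    proof -
      have "C \<otimes>\<^bsub>R Quot N\<^esub> (N +> a) = \<zero>\<^bsub>R Quot N\<^esub>" using C a unfolding lann_def by blast
      hence "N +> (x \<otimes> a) = N" using quot_mult[OF N x(1)] a I quot_zero x(2) by auto
      thus ?thesis using coset_eq_N[OF N] x(1) a I by auto
    qed
    hence "x \<in> annL R N I" unfolding annL_mem using x by blast
    thus "C \<in> (+>) N ` annL R N I" using x by blast
  qed
  show "(+>) N ` annL R N I \<subseteq> lann (R Quot N) ((+>) N ` I)"
  proof
    fix C assume "C \<in> (+>) N ` annL R N I"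
    then obtain x where x: "x \<in> annL R N I" "C = N +> x" by blast
    have xc: "x \<in> carrier R" using x annL_mem by blast
    have "C \<in> carrier (R Quot N)" using quot_carrier[OF N] xc x(2) by blast
    moreover have "C \<otimes>\<^bsub>R Quot N\<^esub> D = \<zero>\<^bsub>R Quot N\<^esub>" if D: "D \<in> (+>) N ` I" for D
    proof -
      from D obtain a where a: "a \<in> I" "D = N +> a" by blast
      have "x \<otimes> a \<in> N" using x(1) a(1) unfolding annL_mem by blast
      hence "N +> (x \<otimes> a) = N" using coset_eq_N[OF N m_closed[OF xc, of a]] a I by blast
      thus ?thesis using quot_mult[OF N xc] a I x(2) quot_zero by auto
    qed
    ultimately show "C \<in> lann (R Quot N) ((+>) N ` I)" unfolding lann_def by blast
  qed
qed

lemma img_rann: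
  assumes N: "ideal N R" and I: "I \<subseteq> carrier R"
  shows "rann (R Quot N) ((+>) N ` I) = (+>) N ` annR R N I"
proof
  show "rann (R Quot N) ((+>) N ` I) \<subseteq> (+>) N ` annR R N I"
  proof
    fix C assume C: "C \<in> rann (R Quot N) ((+>) N ` I)"
    hence "C \<in> carrier (R Quot N)" unfolding rann_def by blast
    then obtain x where x: "x \<in> carrier R" "C = N +> x" using quot_carrier[OF N] by blast
    have "a \<otimes> x \<in> N" if a: "a \<in> I" for a
    proof -
      have "(N +> a) \<otimes>\<^bsub>R Quot N\<^esub> C = \<zero>\<^bsub>R Quot N\<^esub>" using C a unfolding rann_def by blast
      hence "N +> (a \<otimes> x) = N" using quot_mult[OF N _ x(1)] a I quot_zero x(2) by auto
      thus ?thesis using coset_eq_N[OF N] x(1) a I by auto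
    qed
    hence "x \<in> annR R N I" unfolding annR_mem using x by blast
    thus "C \<in> (+>) N ` annR R N I" using x by blast
  qed
  show "(+>) N ` annR R N I \<subseteq> rann (R Quot N) ((+>) N ` I)"
  proof
    fix C assume "C \<in> (+>) N ` annR R N I"
    then obtain x where x: "x \<in> annR R N I" "C = N +> x" by blast
    have xc: "x \<in> carrier R" using x annR_mem by blast
    have "C \<in> carrier (R Quot N)" using quot_carrier[OF N] xc x(2) by blast
    moreover have "D \<otimes>\<^bsub>R Quot N\<^esub> C = \<zero>\<^bsub>R Quot N\<^esub>" if D: "D \<in> (+>) N ` I" for D
    proof -
      from D obtain a where a: "a \<in> I" "D = N +> a" by blast
      have "a \<otimes> x \<in> N" using x(1) a(1) unfolding annR_mem by blast
      hence "N +> (a \<otimes> x) = N" using coset_eq_N[OF N m_closed[OF _ xc, of a]] a I by blast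
      thus ?thesis using quot_mult[OF N _ xc] a I x(2) quot_zero by auto
    qed
    ultimately show "C \<in> rann (R Quot N) ((+>) N ` I)" unfolding rann_def by blast
  qed
qed

lemma annL_sat:
  assumes N: "ideal N R" and I: "I \<subseteq> carrier R" and x: "x \<in> annL R N I" and y: "y \<in> carrier R"
    and eq: "N +> y = N +> x"
  shows "y \<in> annL R N I"
proof -
  have xc: "x \<in> carrier R" and xa: "\<forall>a\<in>I. x \<otimes> a \<in> N" using x by (simp_all add: annL_mem)
  obtain h where h: "h \<in> N" "y = h \<oplus> x" using coset_rep[OF N xc y eq] by blast
  have hc: "h \<in> carrier R" using ideal.Icarr[OF N h(1)] .
  have "y \<otimes> a \<in> N" if a: "a \<in> I" for a
  proof -
    have ac: "a \<in> carrier R" using a I by blast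
    have "y \<otimes> a = h \<otimes> a \<oplus> x \<otimes> a" using h(2) hc xc ac by (simp add: l_distr)
    moreover have "h \<otimes> a \<in> N" using ideal.I_r_closed[OF N h(1) ac] .
    moreover have "x \<otimes> a \<in> N" using xa a by blast
    ultimately show ?thesis using additive_subgroup.a_closed[OF ideal.axioms(1)[OF N]] by simp
  qed
  thus ?thesis unfolding annL_mem using y by blast
qed

lemma img_strict:
  assumes N: "ideal N R" and I: "I \<subseteq> carrier R" and J: "J \<subseteq> carrier R"
    and lt: "annL R N I \<subset> annL R N J"
  shows "(+>) N ` annL R N I \<subset> (+>) N ` annL R N J"
proof
  show "(+>) N ` annL R N I \<subseteq> (+>) N ` annL R N J" using lt by blast
  show "(+>) N ` annL R N I \<noteq> (+>) N ` annL R N J"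
  proof
    assume eq: "(+>) N ` annL R N I = (+>) N ` annL R N J"
    from lt obtain c where c: "c \<in> annL R N J" "c \<notin> annL R N I" by blast
    have "N +> c \<in> (+>) N ` annL R N I" using eq c(1) by blast
    then obtain b where b: "b \<in> annL R N I" "N +> c = N +> b" by blast
    have "c \<in> carrier R" using c(1) annL_mem by blast
    hence "c \<in> annL R N I" using annL_sat[OF N I b(1) _ b(2)] by blast
    thus False using c(2) by blast
  qed
qed

lemma quot_semiprime:
  assumes sp: "sprime R N"
  shows "semiprime_ring (R Quot N)"
  unfolding semiprime_ring_def
proof (intro allI impI)
  have N: "ideal N R" using sprime_ideal[OF sp] .
  fix \<K> assume K: "ideal \<K> (R Quot N)"
    and prod: "\<forall>a\<in>\<K>. \<forall>b\<in>\<K>. a \<otimes>\<^bsub>R Quot N\<^esub> b = \<zero>\<^bsub>R Quot N\<^esub>"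
  have Ksub: "\<K> \<subseteq> carrier (R Quot N)" using ideal.Icarr[OF K] by blast
  have Kid: "ideal (\<Union>\<K>) R" using quot_ideal_imp_ring_ideal[OF N K] .
  have Kc: "\<Union>\<K> \<subseteq> carrier R" using canonical_proj_vimage_in_carrier[OF N Ksub] .
  have mem: "\<And>a. a \<in> carrier R \<Longrightarrow> (a \<in> \<Union>\<K>) = (N +> a \<in> \<K>)"
    using canonical_proj_vimage_mem_iff[OF N Ksub] by blast
  have KN: "\<Union>\<K> \<subseteq> N"
  proof (rule sprimeD[OF sp Kid])
    fix a b assume a: "a \<in> \<Union>\<K>" and b: "b \<in> \<Union>\<K>"
    have ac: "a \<in> carrier R" and bc: "b \<in> carrier R" using a b Kc by auto
    have "N +> a \<in> \<K>" "N +> b \<in> \<K>" using mem[OF ac] mem[OF bc] a b by auto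
    hence "(N +> a) \<otimes>\<^bsub>R Quot N\<^esub> (N +> b) = N" using prod quot_zero by metis
    hence "N +> (a \<otimes> b) = N" using quot_mult[OF N ac bc] by simp
    thus "a \<otimes> b \<in> N" using coset_eq_N[OF N] ac bc by simp
  qed
  show "\<K> = {\<zero>\<^bsub>R Quot N\<^esub>}"
  proof
    show "\<K> \<subseteq> {\<zero>\<^bsub>R Quot N\<^esub>}"
    proof
      fix C assume C: "C \<in> \<K>"
      then obtain x where x: "x \<in> carrier R" "C = N +> x" using Ksub quot_carrier[OF N] by blast
      have "x \<in> \<Union>\<K>" using mem[OF x(1)] C x(2) by simp
      hence "x \<in> N" using KN by blast
      hence "C = N" using coset_eq_N[OF N x(1)] x(2) by simp
      thus "C \<in> {\<zero>\<^bsub>R Quot N\<^esub>}" using quot_zero by simp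
    qed
    show "{\<zero>\<^bsub>R Quot N\<^esub>} \<subseteq> \<K>"
      using additive_subgroup.zero_closed[OF ideal.axioms(1)[OF K]] by simp
  qed
qed

lemma goldie_acc:
  assumes G: "goldie_hyp R" and J: "ideal J R"
  shows "accN R (prad R J)"
proof -
  let ?N = "prad R J"
  have sp: "sprime R ?N" using prad_sprime[OF J] .
  have N: "ideal ?N R" using sprime_ideal[OF sp] .
  have "semiprime_ring (R Quot ?N)" using quot_semiprime[OF sp] .
  moreover have "semiprime_ring (R Quot ?N) \<longrightarrow> left_goldie (R Quot ?N) \<or> right_goldie (R Quot ?N)"
    using G N unfolding goldie_hyp_def by simp
  ultimately have LR: "left_goldie (R Quot ?N) \<or> right_goldie (R Quot ?N)" by blast
  show ?thesis unfolding accN_def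
  proof
    assume "\<exists>I. \<forall>n. ideal (I n) R \<and> annL R ?N (I n) \<subset> annL R ?N (I (Suc n))"
    then obtain I where Iid: "\<And>n. ideal (I n) R" and Ilt: "\<And>n. annL R ?N (I n) \<subset> annL R ?N (I (Suc n))"
      by blast
    have Ic: "\<And>n. I n \<subseteq> carrier R" using ideal.Icarr[OF Iid] by blast
    define Y where "Y n = (+>) ?N ` (I n)" for n
    have Yc: "\<And>n. Y n \<subseteq> carrier (R Quot ?N)" unfolding Y_def using quot_carrier[OF N] Ic by blast
    have strict: "\<And>n. (+>) ?N ` annL R ?N (I n) \<subset> (+>) ?N ` annL R ?N (I (Suc n))"
      using img_strict[OF N Ic Ic Ilt] .
    from LR show False
    proof
      assume "left_goldie (R Quot ?N)"
      moreover have "\<forall>n. Y n \<subseteq> carrier (R Quot ?N) \<and> lann (R Quot ?N) (Y n) \<subset> lann (R Quot ?N) (Y (Suc n))"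
        using Yc strict unfolding Y_def by (simp add: img_lann[OF N Ic])
      ultimately show False unfolding left_goldie_def by (metis (no_types, lifting))
    next
      assume "right_goldie (R Quot ?N)"
      moreover have "\<forall>n. Y n \<subseteq> carrier (R Quot ?N) \<and> rann (R Quot ?N) (Y n) \<subset> rann (R Quot ?N) (Y (Suc n))"
        using Yc strict unfolding Y_def by (simp add: img_rann[OF N Ic] annL_eq_annR[OF sp Iid, symmetric])
      ultimately show False unfolding right_goldie_def by (metis (no_types, lifting))
    qed
  qed
qed

lemma goldie_fin:
  assumes G: "goldie_hyp R" and J: "ideal J R"
  shows "\<exists>F. finite F \<and> F \<subseteq> Spec R \<and> (\<forall>P\<in>F. J \<subseteq> P) \<and> carrier R \<inter> \<Inter>F \<subseteq> prad R J"
proof -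
  obtain F where F: "finite F" "F \<subseteq> Spec R" "\<forall>P\<in>F. prad R J \<subseteq> P" "carrier R \<inter> \<Inter>F \<subseteq> prad R J"
    using goldie_finite[OF prad_sprime[OF J] goldie_acc[OF G J]] by blast
  have "\<forall>P\<in>F. J \<subseteq> P" using F(3) prad_sup[OF J] by (meson subset_trans)
  thus ?thesis using F(1,2,4) by blast
qed

end


context ring
begin

lemma quot_prime_pullback:
  assumes J: "ideal J R" and P: "\<P> \<in> Spec (R Quot J)"
  shows "\<Union>\<P> \<in> Spec R" "J \<subseteq> \<Union>\<P>"
proof -
  have Qr: "ring (R Quot J)" using ideal.quotient_is_ring[OF J] .
  have Pid: "ideal \<P> (R Quot J)" using ring.Spec_ideal[OF Qr P] .
  have Psub: "\<P> \<subseteq> carrier (R Quot J)" using ideal.Icarr[OF Pid] by blast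
  have mem: "\<And>a. a \<in> carrier R \<Longrightarrow> (a \<in> \<Union>\<P>) = (J +> a \<in> \<P>)"
    using canonical_proj_vimage_mem_iff[OF J Psub] by blast
  have UPid: "ideal (\<Union>\<P>) R" using quot_ideal_imp_ring_ideal[OF J Pid] .
  have "J \<in> \<P>" using additive_subgroup.zero_closed[OF ideal.axioms(1)[OF Pid]] quot_zero by simp
  thus JP: "J \<subseteq> \<Union>\<P>" by blast
  have Pne: "\<P> \<noteq> carrier (R Quot J)" using P unfolding Spec_def nc_prime_def by simp
  show "\<Union>\<P> \<in> Spec R"
    unfolding Spec_def nc_prime_def mem_Collect_eq
  proof (intro conjI allI impI)
    show "ideal (\<Union>\<P>) R" by fact
    show "\<Union>\<P> \<noteq> carrier R"
    proof
      assume "\<Union>\<P> = carrier R"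
      hence "J +> \<one> \<in> \<P>" using mem[of \<one>] by simp
      hence "\<one>\<^bsub>R Quot J\<^esub> \<in> \<P>" using quot_one by simp
      hence "\<P> = carrier (R Quot J)" using ideal.one_imp_carrier[OF Pid] by blast
      thus False using Pne by blast
    qed
    fix I1 I2 assume I1: "ideal I1 R" and I2: "ideal I2 R" and prod: "\<forall>a\<in>I1. \<forall>b\<in>I2. a \<otimes> b \<in> \<Union>\<P>"
    have I1c: "\<And>a. a \<in> I1 \<Longrightarrow> a \<in> carrier R" using ideal.Icarr[OF I1] by blast
    have I2c: "\<And>a. a \<in> I2 \<Longrightarrow> a \<in> carrier R" using ideal.Icarr[OF I2] by blast
    have "(+>) J ` I1 \<subseteq> \<P> \<or> (+>) J ` I2 \<subseteq> \<P>"
    proof (rule ring.Spec_prime[OF Qr P ring_ideal_imp_quot_ideal[OF J I1] ring_ideal_imp_quot_ideal[OF J I2]])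
      fix C D assume "C \<in> (+>) J ` I1" "D \<in> (+>) J ` I2"
      then obtain a b where a: "a \<in> I1" "C = J +> a" and b: "b \<in> I2" "D = J +> b" by blast
      have "a \<otimes> b \<in> \<Union>\<P>" using prod a b by blast
      hence "J +> (a \<otimes> b) \<in> \<P>" using mem[OF m_closed[OF I1c[OF a(1)] I2c[OF b(1)]]] by simp
      thus "C \<otimes>\<^bsub>R Quot J\<^esub> D \<in> \<P>" using quot_mult[OF J I1c[OF a(1)] I2c[OF b(1)]] a b by simp
    qed
    thus "I1 \<subseteq> \<Union>\<P> \<or> I2 \<subseteq> \<Union>\<P>"
    proof
      assume h: "(+>) J ` I1 \<subseteq> \<P>"
      have "I1 \<subseteq> \<Union>\<P>"
      proof
        fix a assume "a \<in> I1" thus "a \<in> \<Union>\<P>" using h mem[OF I1c] by blast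
      qed
      thus ?thesis by blast
    next
      assume h: "(+>) J ` I2 \<subseteq> \<P>"
      have "I2 \<subseteq> \<Union>\<P>"
      proof
        fix a assume "a \<in> I2" thus "a \<in> \<Union>\<P>" using h mem[OF I2c] by blast
      qed
      thus ?thesis by blast
    qed
  qed
qed

lemma foldr_closed: "set ys \<subseteq> carrier R \<Longrightarrow> foldr (\<otimes>) ys \<one> \<in> carrier R"
  by (induction ys) auto

lemma foldr_quot:
  assumes J: "ideal J R"
  shows "set ys \<subseteq> carrier R \<Longrightarrow>
    foldr (\<otimes>\<^bsub>R Quot J\<^esub>) (map ((+>) J) ys) \<one>\<^bsub>R Quot J\<^esub> = J +> foldr (\<otimes>) ys \<one>"
proof (induction ys)
  case Nil thus ?case using quot_one by simp
next
  case (Cons y ys)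
  hence yc: "y \<in> carrier R" and ysc: "set ys \<subseteq> carrier R" by auto
  have "foldr (\<otimes>\<^bsub>R Quot J\<^esub>) (map ((+>) J) (y # ys)) \<one>\<^bsub>R Quot J\<^esub>
      = (J +> y) \<otimes>\<^bsub>R Quot J\<^esub> (J +> foldr (\<otimes>) ys \<one>)" using Cons.IH[OF ysc] by simp
  also have "\<dots> = J +> (y \<otimes> foldr (\<otimes>) ys \<one>)" using quot_mult[OF J yc foldr_closed[OF ysc]] .
  finally show ?case by simp
qed

lemma goldie_nil:
  assumes G: "goldie_hyp R" and J: "ideal J R"
  shows "\<exists>n. \<forall>ys. length ys = n \<longrightarrow> set ys \<subseteq> prad R J \<longrightarrow> foldr (\<otimes>) ys \<one> \<in> J"
proof -
  have "nilpotent_set (R Quot J) (prime_radical (R Quot J))" using G J unfolding goldie_hyp_def by simp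
  then obtain n where n: "\<And>xs. length xs = n \<Longrightarrow> set xs \<subseteq> prime_radical (R Quot J) \<Longrightarrow>
      foldr (\<otimes>\<^bsub>R Quot J\<^esub>) xs \<one>\<^bsub>R Quot J\<^esub> = \<zero>\<^bsub>R Quot J\<^esub>"
    unfolding nilpotent_set_def by blast
  have Nc: "prad R J \<subseteq> carrier R" using ideal.Icarr[OF prad_ideal[OF J]] by blast
  have "foldr (\<otimes>) ys \<one> \<in> J" if len: "length ys = n" and ys: "set ys \<subseteq> prad R J" for ys
  proof -
    have ysc: "set ys \<subseteq> carrier R" using ys Nc by blast
    have "set (map ((+>) J) ys) \<subseteq> prime_radical (R Quot J)"
    proof
      fix C assume "C \<in> set (map ((+>) J) ys)"
      then obtain y where y: "y \<in> set ys" "C = J +> y" by auto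
      have yc: "y \<in> carrier R" using y ysc by blast
      have "C \<in> carrier (R Quot J)" using quot_carrier[OF J] yc y(2) by blast
      moreover have "C \<in> \<P>" if P: "\<P> \<in> Spec (R Quot J)" for \<P>
      proof -
        have "y \<in> \<Union>\<P>" using prad_sub[OF quot_prime_pullback[OF J P]] y(1) ys by blast
        moreover have "\<P> \<subseteq> carrier (R Quot J)"
          using ideal.Icarr[OF ring.Spec_ideal[OF ideal.quotient_is_ring[OF J] P]] by blast
        ultimately show ?thesis using canonical_proj_vimage_mem_iff[OF J _ yc] y(2) by blast
      qed
      ultimately show "C \<in> prime_radical (R Quot J)"
        unfolding prime_radical_def prad_def Iz_def Vz_def by blast
    qed
    hence "foldr (\<otimes>\<^bsub>R Quot J\<^esub>) (map ((+>) J) ys) \<one>\<^bsub>R Quot J\<^esub> = \<zero>\<^bsub>R Quot J\<^esub>"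
      using n len by simp
    hence "J +> foldr (\<otimes>) ys \<one> = J" using foldr_quot[OF J ysc] quot_zero by simp
    thus ?thesis using coset_eq_N[OF J foldr_closed[OF ysc]] by simp
  qed
  thus ?thesis by blast
qed

end


context ring
begin

lemma lgen_mem: "g \<in> left_gen R I \<longleftrightarrow>
   (\<exists>n s x. g = (\<Oplus>k\<in>{..<(n::nat)}. s k \<otimes> x k) \<and> s \<in> {..<n} \<rightarrow> carrier R \<and> x \<in> {..<n} \<rightarrow> I)"
  unfolding left_gen_def by blast

lemma left_ideal_by_closure:
  assumes "L \<subseteq> carrier R" "\<zero> \<in> L" "\<And>a b. a \<in> L \<Longrightarrow> b \<in> L \<Longrightarrow> a \<oplus> b \<in> L"
    "\<And>a r. a \<in> L \<Longrightarrow> r \<in> carrier R \<Longrightarrow> r \<otimes> a \<in> L"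
  shows "left_ideal R L"
proof -
  have neg: "\<ominus> a \<in> L" if "a \<in> L" for a
  proof -
    have "\<ominus> a = (\<ominus> \<one>) \<otimes> a" using that assms(1) by (simp add: l_minus subsetD)
    thus ?thesis using assms(4) that by simp
  qed
  show ?thesis unfolding left_ideal_def using addsub_by_closure[OF assms(1-3) neg] assms(4) by blast
qed

lemma lgen_base:
  assumes I: "I \<subseteq> carrier R" and a: "a \<in> I"
  shows "a \<in> left_gen R I"
proof -
  have ac: "a \<in> carrier R" using I a by blast
  have "(\<Oplus>k\<in>{..<Suc 0}. (\<lambda>_. \<one>) k \<otimes> (\<lambda>_. a) k) = \<one> \<otimes> a"
    using ac by (simp add: lessThan_Suc finsum_insert)
  hence "a = (\<Oplus>k\<in>{..<Suc 0}. (\<lambda>_. \<one>) k \<otimes> (\<lambda>_. a) k)" using ac by simp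
  moreover have "(\<lambda>_. \<one>) \<in> {..<Suc 0} \<rightarrow> carrier R" "(\<lambda>_. a) \<in> {..<Suc 0} \<rightarrow> I" using a by auto
  ultimately show ?thesis unfolding lgen_mem
    by (intro exI[of _ "Suc 0"] exI[of _ "\<lambda>_. \<one>"] exI[of _ "\<lambda>_. a"]) simp
qed

lemma lgen_min:
  assumes L: "left_ideal R L" and IL: "I \<subseteq> L"
  shows "left_gen R I \<subseteq> L"
proof
  have Lsub: "additive_subgroup L R" and Ll: "\<forall>r\<in>carrier R. \<forall>x\<in>L. r \<otimes> x \<in> L"
    using L unfolding left_ideal_def by auto
  have Lc: "L \<subseteq> carrier R" using additive_subgroup.a_subset[OF Lsub] .
  fix g assume "g \<in> left_gen R I"
  then obtain n s x where g: "g = (\<Oplus>k\<in>{..<(n::nat)}. s k \<otimes> x k)" and s: "s \<in> {..<n} \<rightarrow> carrier R"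
    and x: "x \<in> {..<n} \<rightarrow> I" unfolding lgen_mem by blast
  have "\<And>m. m \<le> n \<Longrightarrow> (\<Oplus>k\<in>{..<m}. s k \<otimes> x k) \<in> L"
  proof -
    fix m show "m \<le> n \<Longrightarrow> (\<Oplus>k\<in>{..<m}. s k \<otimes> x k) \<in> L"
    proof (induction m)
      case 0 thus ?case using additive_subgroup.zero_closed[OF Lsub] by simp
    next
      case (Suc m)
      have sm: "s m \<in> carrier R" "x m \<in> L" using s x IL Suc.prems by auto
      have fc: "(\<lambda>k. s k \<otimes> x k) \<in> {..<m} \<rightarrow> carrier R"
      proof
        fix k assume "k \<in> {..<m}"
        hence "k \<in> {..<n}" using Suc.prems by auto
        hence "s k \<in> carrier R" "x k \<in> carrier R" using s x IL Lc by blast+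
        thus "s k \<otimes> x k \<in> carrier R" by simp
      qed
      have "(\<Oplus>k\<in>{..<Suc m}. s k \<otimes> x k) = s m \<otimes> x m \<oplus> (\<Oplus>k\<in>{..<m}. s k \<otimes> x k)"
        unfolding lessThan_Suc using sm Lc fc by (subst finsum_insert) auto
      moreover have "s m \<otimes> x m \<in> L" using Ll sm by blast
      moreover have "(\<Oplus>k\<in>{..<m}. s k \<otimes> x k) \<in> L" using Suc by simp
      ultimately show ?case using additive_subgroup.a_closed[OF Lsub] by simp
    qed
  qed
  thus "g \<in> L" using g by blast
qed

lemma lgen_carrier: "I \<subseteq> carrier R \<Longrightarrow> left_gen R I \<subseteq> carrier R"
proof
  fix g assume I: "I \<subseteq> carrier R" and "g \<in> left_gen R I"
  then obtain n s x where g: "g = (\<Oplus>k\<in>{..<(n::nat)}. s k \<otimes> x k)" and s: "s \<in> {..<n} \<rightarrow> carrier R"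
    and x: "x \<in> {..<n} \<rightarrow> I" unfolding lgen_mem by blast
  have "(\<lambda>k. s k \<otimes> x k) \<in> {..<n} \<rightarrow> carrier R" using s x I by (auto simp: Pi_def)
  thus "g \<in> carrier R" using g finsum_closed by simp
qed

lemma lgen_zero: "\<zero> \<in> left_gen R I"
proof -
  have "\<zero> = (\<Oplus>k\<in>{..<(0::nat)}. (\<lambda>_. \<one>) k \<otimes> (\<lambda>_. \<zero>) k)" by simp
  moreover have "(\<lambda>_. \<one>) \<in> {..<(0::nat)} \<rightarrow> carrier R" "(\<lambda>_. \<zero>) \<in> {..<(0::nat)} \<rightarrow> I" by auto
  ultimately show ?thesis unfolding lgen_mem
    by (intro exI[of _ "0::nat"] exI[of _ "\<lambda>_. \<one>"] exI[of _ "\<lambda>_. \<zero>"]) simp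
qed

lemma lgen_lmult:
  assumes I: "I \<subseteq> carrier R" and g: "g \<in> left_gen R I" and r: "r \<in> carrier R"
  shows "r \<otimes> g \<in> left_gen R I"
proof -
  obtain n s x where g: "g = (\<Oplus>k\<in>{..<(n::nat)}. s k \<otimes> x k)" and s: "s \<in> {..<n} \<rightarrow> carrier R"
    and x: "x \<in> {..<n} \<rightarrow> I" using g unfolding lgen_mem by blast
  have fc: "(\<lambda>k. s k \<otimes> x k) \<in> {..<n} \<rightarrow> carrier R" using s x I by (auto simp: Pi_def)
  have "r \<otimes> g = (\<Oplus>k\<in>{..<n}. r \<otimes> (s k \<otimes> x k))" using g finsum_rdistr[OF _ r fc] by simp
  also have "\<dots> = (\<Oplus>k\<in>{..<n}. (\<lambda>k. r \<otimes> s k) k \<otimes> x k)"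
    by (rule finsum_cong') (use s x I r in \<open>auto simp: Pi_def m_assoc subsetD\<close>)
  finally have eq: "r \<otimes> g = (\<Oplus>k\<in>{..<n}. (\<lambda>k. r \<otimes> s k) k \<otimes> x k)" .
  have "(\<lambda>k. r \<otimes> s k) \<in> {..<n} \<rightarrow> carrier R" using s r by auto
  thus ?thesis unfolding lgen_mem using eq x
    by (intro exI[of _ n] exI[of _ "\<lambda>k. r \<otimes> s k"] exI[of _ x]) simp
qed

lemma lgen_add:
  assumes I: "I \<subseteq> carrier R" and g1: "g1 \<in> left_gen R I" and g2: "g2 \<in> left_gen R I"
  shows "g1 \<oplus> g2 \<in> left_gen R I"
proof -
  obtain n s1 x1 where g1: "g1 = (\<Oplus>k\<in>{..<(n::nat)}. s1 k \<otimes> x1 k)" and s1: "s1 \<in> {..<n} \<rightarrow> carrier R"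
    and x1: "x1 \<in> {..<n} \<rightarrow> I" using g1 unfolding lgen_mem by blast
  obtain m s2 x2 where g2: "g2 = (\<Oplus>k\<in>{..<(m::nat)}. s2 k \<otimes> x2 k)" and s2: "s2 \<in> {..<m} \<rightarrow> carrier R"
    and x2: "x2 \<in> {..<m} \<rightarrow> I" using g2 unfolding lgen_mem by blast
  define s where "s k = (if k < n then s1 k else s2 (k - n))" for k
  define x where "x k = (if k < n then x1 k else x2 (k - n))" for k
  have s: "s \<in> {..<n+m} \<rightarrow> carrier R" using s1 s2 unfolding s_def by (auto simp: Pi_def)
  have x: "x \<in> {..<n+m} \<rightarrow> I" using x1 x2 unfolding x_def by (auto simp: Pi_def)
  have fc: "(\<lambda>k. s k \<otimes> x k) \<in> {..<j} \<rightarrow> carrier R" if j: "j \<le> n + m" for j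
  proof
    fix k assume "k \<in> {..<j}"
    hence "k \<in> {..<n+m}" using j by auto
    hence "s k \<in> carrier R" "x k \<in> carrier R" using s x I by blast+
    thus "s k \<otimes> x k \<in> carrier R" by simp
  qed
  have g1c: "g1 \<in> carrier R" using lgen_carrier[OF I] assms(2) by blast
  have main: "j \<le> m \<Longrightarrow> (\<Oplus>k\<in>{..<n+j}. s k \<otimes> x k) = g1 \<oplus> (\<Oplus>k\<in>{..<j}. s2 k \<otimes> x2 k)" for j
  proof (induction j)
    case 0
    have "(\<Oplus>k\<in>{..<n}. s k \<otimes> x k) = g1" unfolding g1
      by (rule finsum_cong') (use s1 x1 I in \<open>auto simp: s_def x_def Pi_def subsetD\<close>)
    thus ?case using g1c by simp
  next
    case (Suc j)
    have c1: "s2 j \<in> carrier R" "x2 j \<in> carrier R" using s2 x2 I Suc.prems by (auto simp: subsetD)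
    have fc2: "(\<lambda>k. s2 k \<otimes> x2 k) \<in> {..<j} \<rightarrow> carrier R" using s2 x2 I Suc.prems by (auto simp: Pi_def subsetD)
    have "(\<Oplus>k\<in>{..<n + Suc j}. s k \<otimes> x k) = s (n+j) \<otimes> x (n+j) \<oplus> (\<Oplus>k\<in>{..<n+j}. s k \<otimes> x k)"
      using fc[of "n+j"] Suc.prems c1 by (simp add: lessThan_Suc finsum_insert s_def x_def)
    also have "\<dots> = s2 j \<otimes> x2 j \<oplus> (g1 \<oplus> (\<Oplus>k\<in>{..<j}. s2 k \<otimes> x2 k))"
      using Suc by (simp add: s_def x_def)
    also have "\<dots> = g1 \<oplus> (s2 j \<otimes> x2 j \<oplus> (\<Oplus>k\<in>{..<j}. s2 k \<otimes> x2 k))"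
      using c1 g1c fc2 finsum_closed[OF fc2] by (simp add: a_lcomm)
    also have "\<dots> = g1 \<oplus> (\<Oplus>k\<in>{..<Suc j}. s2 k \<otimes> x2 k)"
      using c1 fc2 by (simp add: lessThan_Suc finsum_insert)
    finally show ?case .
  qed
  have "g1 \<oplus> g2 = (\<Oplus>k\<in>{..<n+m}. s k \<otimes> x k)" using main[of m] g2 by simp
  thus ?thesis unfolding lgen_mem using s x
    by (intro exI[of _ "n+m"] exI[of _ s] exI[of _ x]) simp
qed

lemma lgen_left_ideal: "I \<subseteq> carrier R \<Longrightarrow> left_ideal R (left_gen R I)"
  by (rule left_ideal_by_closure) (auto intro: lgen_carrier[THEN subsetD] lgen_zero lgen_add lgen_lmult)

lemma lgen_mono: "I \<subseteq> J \<Longrightarrow> left_gen R I \<subseteq> left_gen R J"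
  unfolding left_gen_def by blast

lemma extS_mem: "x \<in> extS R I \<longleftrightarrow> x \<in> carrier R \<and> (\<forall>t\<in>carrier R. x \<otimes> t \<in> left_gen R I)"
  unfolding extS_def by blast

lemma extS_mono: "I \<subseteq> J \<Longrightarrow> extS R I \<subseteq> extS R J"
  unfolding extS_def using lgen_mono by blast

lemma extS_lgen: "x \<in> extS R I \<Longrightarrow> x \<in> left_gen R I"
  using extS_mem[of x I] by (metis one_closed r_one)

lemma extS_ideal:
  assumes I: "I \<subseteq> carrier R"
  shows "ideal (extS R I) R"
proof (rule ideal_by_closure)
  show "extS R I \<subseteq> carrier R" unfolding extS_def by blast
  show "\<zero> \<in> extS R I" unfolding extS_mem using lgen_zero by simp
  fix a b assume a: "a \<in> extS R I" and b: "b \<in> extS R I"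
  show "a \<oplus> b \<in> extS R I" unfolding extS_mem
  proof (intro conjI ballI)
    show "a \<oplus> b \<in> carrier R" using a b extS_mem by simp
    fix t assume t: "t \<in> carrier R"
    have "(a \<oplus> b) \<otimes> t = a \<otimes> t \<oplus> b \<otimes> t" using a b t extS_mem by (simp add: l_distr)
    thus "(a \<oplus> b) \<otimes> t \<in> left_gen R I" using lgen_add[OF I] a b t extS_mem by simp
  qed
next
  fix a r assume a: "a \<in> extS R I" and r: "r \<in> carrier R"
  have ac: "a \<in> carrier R" using a extS_mem by blast
  show "r \<otimes> a \<in> extS R I" unfolding extS_mem
  proof (intro conjI ballI)
    show "r \<otimes> a \<in> carrier R" using ac r by simp
    fix t assume t: "t \<in> carrier R"
    have "r \<otimes> a \<otimes> t = r \<otimes> (a \<otimes> t)" using ac r t by (simp add: m_assoc)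
    thus "r \<otimes> a \<otimes> t \<in> left_gen R I" using lgen_lmult[OF I _ r] a t extS_mem by simp
  qed
  show "a \<otimes> r \<in> extS R I" unfolding extS_mem
  proof (intro conjI ballI)
    show "a \<otimes> r \<in> carrier R" using ac r by simp
    fix t assume t: "t \<in> carrier R"
    have "a \<otimes> r \<otimes> t = a \<otimes> (r \<otimes> t)" using ac r t by (simp add: m_assoc)
    thus "a \<otimes> r \<otimes> t \<in> left_gen R I" using a t r extS_mem by simp
  qed
qed

end


context ring
begin

lemma ext_prod:
  assumes A: "A \<subseteq> carrier R" and B: "B \<subseteq> carrier R" and C: "C \<subseteq> carrier R"
    and AB: "\<And>a b. a \<in> A \<Longrightarrow> b \<in> B \<Longrightarrow> a \<otimes> b \<in> C"
    and x: "x \<in> extS R A" and y: "y \<in> extS R B"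
  shows "x \<otimes> y \<in> extS R C"
proof -
  have lgC: "\<And>g. g \<in> left_gen R C \<Longrightarrow> g \<in> carrier R" using lgen_carrier[OF C] by blast
  have XA: "ideal (extS R A) R" using extS_ideal[OF A] .
  have Xc: "\<And>z. z \<in> extS R A \<Longrightarrow> z \<in> carrier R" using extS_mem by blast
  have step1: "g \<otimes> b \<in> left_gen R C" if g: "g \<in> left_gen R A" and b: "b \<in> B" for g b
  proof -
    have bc: "b \<in> carrier R" using b B by blast
    let ?L = "{g \<in> carrier R. g \<otimes> b \<in> left_gen R C}"
    have "left_ideal R ?L"
    proof (rule left_ideal_by_closure)
      show "?L \<subseteq> carrier R" by blast
      show "\<zero> \<in> ?L" using lgen_zero bc by simp
      fix g1 g2 assume "g1 \<in> ?L" "g2 \<in> ?L"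
      thus "g1 \<oplus> g2 \<in> ?L" using lgen_add[OF C] bc by (simp add: l_distr)
    next
      fix g r assume "g \<in> ?L" "r \<in> carrier R"
      thus "r \<otimes> g \<in> ?L" using lgen_lmult[OF C] bc by (simp add: m_assoc)
    qed
    moreover have "A \<subseteq> ?L" using AB b A lgen_base[OF C] by blast
    ultimately have "left_gen R A \<subseteq> ?L" using lgen_min by blast
    thus ?thesis using g by blast
  qed
  let ?L = "{u \<in> carrier R. \<forall>z\<in>extS R A. z \<otimes> u \<in> left_gen R C}"
  have "left_ideal R ?L"
  proof (rule left_ideal_by_closure)
    show "?L \<subseteq> carrier R" by blast
    show "\<zero> \<in> ?L" using lgen_zero Xc by simp
    fix u1 u2 assume u1: "u1 \<in> ?L" and u2: "u2 \<in> ?L"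
    show "u1 \<oplus> u2 \<in> ?L"
    proof (intro CollectI conjI ballI)
      show "u1 \<oplus> u2 \<in> carrier R" using u1 u2 by simp
      fix z assume z: "z \<in> extS R A"
      have "z \<otimes> (u1 \<oplus> u2) = z \<otimes> u1 \<oplus> z \<otimes> u2" using u1 u2 Xc[OF z] by (simp add: r_distr)
      thus "z \<otimes> (u1 \<oplus> u2) \<in> left_gen R C" using lgen_add[OF C] u1 u2 z by simp
    qed
  next
    fix u r assume u: "u \<in> ?L" and r: "r \<in> carrier R"
    show "r \<otimes> u \<in> ?L"
    proof (intro CollectI conjI ballI)
      show "r \<otimes> u \<in> carrier R" using u r by simp
      fix z assume z: "z \<in> extS R A"
      have "z \<otimes> (r \<otimes> u) = (z \<otimes> r) \<otimes> u" using u r Xc[OF z] by (simp add: m_assoc)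
      moreover have "z \<otimes> r \<in> extS R A" using ideal.I_r_closed[OF XA z r] .
      ultimately show "z \<otimes> (r \<otimes> u) \<in> left_gen R C" using u by simp
    qed
  qed
  moreover have "B \<subseteq> ?L" using step1 extS_lgen B by blast
  ultimately have BL: "left_gen R B \<subseteq> ?L" using lgen_min by blast
  have xc: "x \<in> carrier R" and yc: "y \<in> carrier R" using x y extS_mem by auto
  show ?thesis unfolding extS_mem
  proof (intro conjI ballI)
    show "x \<otimes> y \<in> carrier R" using xc yc by simp
    fix t assume t: "t \<in> carrier R"
    have "y \<otimes> t \<in> left_gen R B" using y t extS_mem by blast
    hence "x \<otimes> (y \<otimes> t) \<in> left_gen R C" using BL x by blast
    thus "x \<otimes> y \<otimes> t \<in> left_gen R C" using xc yc t by (simp add: m_assoc)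
  qed
qed

lemma ext_nil:
  assumes P: "P \<in> Spec R" and N: "N \<subseteq> carrier R"
    and nil: "\<And>ys. length ys = n \<Longrightarrow> set ys \<subseteq> N \<Longrightarrow> foldr (\<otimes>) ys \<one> \<in> P"
  shows "extS R N \<subseteq> P"
proof -
  let ?X = "extS R N"
  have Xid: "ideal ?X R" using extS_ideal[OF N] .
  have Xc: "\<And>z. z \<in> ?X \<Longrightarrow> z \<in> carrier R" using extS_mem by blast
  have Pid: "ideal P R" using Spec_ideal[OF P] .
  have Pc: "\<And>z. z \<in> P \<Longrightarrow> z \<in> carrier R" using ideal.Icarr[OF Pid] by blast
  have fc: "\<And>ys. set ys \<subseteq> N \<Longrightarrow> foldr (\<otimes>) ys \<one> \<in> carrier R" using foldr_closed N by blast
  define W where "W k = {w \<in> carrier R. \<forall>ys. length ys = k \<longrightarrow> set ys \<subseteq> N \<longrightarrow>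
      (\<forall>t\<in>carrier R. w \<otimes> t \<otimes> foldr (\<otimes>) ys \<one> \<in> P)}" for k
  have Wmem: "w \<in> W k \<longleftrightarrow> w \<in> carrier R \<and> (\<forall>ys. length ys = k \<longrightarrow> set ys \<subseteq> N \<longrightarrow>
      (\<forall>t\<in>carrier R. w \<otimes> t \<otimes> foldr (\<otimes>) ys \<one> \<in> P))" for w k
    unfolding W_def by blast
  have Wn: "carrier R \<subseteq> W n"
  proof
    fix w assume w: "w \<in> carrier R"
    have "w \<otimes> t \<otimes> foldr (\<otimes>) ys \<one> \<in> P" if "length ys = n" "set ys \<subseteq> N" "t \<in> carrier R" for ys t
      using ideal.I_l_closed[OF Pid nil[OF that(1,2)]] w that(3) by simp
    thus "w \<in> W n" unfolding Wmem using w by blast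
  qed
  have W0: "W 0 \<subseteq> P"
  proof
    fix w assume "w \<in> W 0"
    hence wc: "w \<in> carrier R" and h: "\<forall>t\<in>carrier R. w \<otimes> t \<otimes> foldr (\<otimes>) [] \<one> \<in> P"
      unfolding Wmem by auto
    have "w \<otimes> \<one> \<otimes> foldr (\<otimes>) [] \<one> \<in> P" using h one_closed by blast
    thus "w \<in> P" using wc by simp
  qed
  have PW: "P \<subseteq> W k" for k
  proof
    fix w assume w: "w \<in> P"
    have wc: "w \<in> carrier R" using Pc[OF w] .
    have "w \<otimes> t \<otimes> foldr (\<otimes>) ys \<one> \<in> P" if "set ys \<subseteq> N" "t \<in> carrier R" for ys t
      using ideal.I_r_closed[OF Pid ideal.I_r_closed[OF Pid w that(2)] fc[OF that(1)]] .
    thus "w \<in> W k" unfolding Wmem using wc by blast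
  qed
  have Wr: "w \<otimes> r \<in> W k" if w: "w \<in> W k" and r: "r \<in> carrier R" for w r k
  proof -
    have wc: "w \<in> carrier R" using w Wmem by blast
    have "w \<otimes> r \<otimes> t \<otimes> foldr (\<otimes>) ys \<one> \<in> P" if "length ys = k" "set ys \<subseteq> N" "t \<in> carrier R" for ys t
    proof -
      have "w \<otimes> (r \<otimes> t) \<otimes> foldr (\<otimes>) ys \<one> \<in> P" using w that r unfolding Wmem by simp
      thus ?thesis using wc r that(3) by (simp add: m_assoc)
    qed
    thus ?thesis unfolding Wmem using wc r by blast
  qed
  have C1: "w \<otimes> x \<otimes> t \<otimes> foldr (\<otimes>) ys \<one> \<in> P"
    if w: "w \<in> W (Suc k)" and x: "x \<in> ?X" and ys: "length ys = k" "set ys \<subseteq> N" and t: "t \<in> carrier R"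
    for w x k ys t
  proof -
    let ?f = "foldr (\<otimes>) ys \<one>"
    have f: "?f \<in> carrier R" using fc[OF ys(2)] .
    let ?L = "{u \<in> carrier R. \<forall>w\<in>W (Suc k). w \<otimes> u \<otimes> ?f \<in> P}"
    have Wc: "\<And>w. w \<in> W (Suc k) \<Longrightarrow> w \<in> carrier R" using Wmem by blast
    have "left_ideal R ?L"
    proof (rule left_ideal_by_closure)
      show "?L \<subseteq> carrier R" by blast
      show "\<zero> \<in> ?L" using Wc f additive_subgroup.zero_closed[OF ideal.axioms(1)[OF Pid]] by simp
      fix u1 u2 assume u1: "u1 \<in> ?L" and u2: "u2 \<in> ?L"
      show "u1 \<oplus> u2 \<in> ?L"
      proof (intro CollectI conjI ballI)
        show "u1 \<oplus> u2 \<in> carrier R" using u1 u2 by simp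
        fix w assume w: "w \<in> W (Suc k)"
        have "w \<otimes> (u1 \<oplus> u2) \<otimes> ?f = w \<otimes> u1 \<otimes> ?f \<oplus> w \<otimes> u2 \<otimes> ?f"
          using u1 u2 Wc[OF w] f by (simp add: r_distr l_distr)
        thus "w \<otimes> (u1 \<oplus> u2) \<otimes> ?f \<in> P"
          using u1 u2 w additive_subgroup.a_closed[OF ideal.axioms(1)[OF Pid]] by simp
      qed
    next
      fix u r assume u: "u \<in> ?L" and r: "r \<in> carrier R"
      show "r \<otimes> u \<in> ?L"
      proof (intro CollectI conjI ballI)
        show "r \<otimes> u \<in> carrier R" using u r by simp
        fix w assume w: "w \<in> W (Suc k)"
        have "w \<otimes> (r \<otimes> u) \<otimes> ?f = (w \<otimes> r) \<otimes> u \<otimes> ?f" using u r Wc[OF w] f by (simp add: m_assoc)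
        thus "w \<otimes> (r \<otimes> u) \<otimes> ?f \<in> P" using u Wr[OF w r] by simp
      qed
    qed
    moreover have "N \<subseteq> ?L"
    proof
      fix a assume a: "a \<in> N"
      have ac: "a \<in> carrier R" using a N by blast
      have "w \<otimes> a \<otimes> ?f \<in> P" if w: "w \<in> W (Suc k)" for w
      proof -
        have h: "\<forall>ys'. length ys' = Suc k \<longrightarrow> set ys' \<subseteq> N \<longrightarrow>
            (\<forall>t\<in>carrier R. w \<otimes> t \<otimes> foldr (\<otimes>) ys' \<one> \<in> P)" using w unfolding Wmem by blast
        have "length (a # ys) = Suc k" "set (a # ys) \<subseteq> N" using ys a by auto
        hence "w \<otimes> \<one> \<otimes> foldr (\<otimes>) (a # ys) \<one> \<in> P" using h one_closed by blast
        thus ?thesis using Wc[OF w] ac f by (simp add: m_assoc)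
      qed
      thus "a \<in> ?L" using ac by blast
    qed
    ultimately have "left_gen R N \<subseteq> ?L" using lgen_min by blast
    moreover have "x \<otimes> t \<in> left_gen R N" using extS_lgen ideal.I_r_closed[OF Xid x t] by blast
    ultimately have "w \<otimes> (x \<otimes> t) \<otimes> ?f \<in> P" using w by blast
    thus ?thesis using Wc[OF w] Xc[OF x] t f by (simp add: m_assoc)
  qed
  have step: "?X \<subseteq> W k" if XW: "?X \<subseteq> W (Suc k)" for k
  proof -
    let ?J = "{u \<in> carrier R. \<forall>x\<in>?X. x \<otimes> u \<in> P}"
    have Jid: "ideal ?J R"
    proof (rule ideal_by_closure)
      show "?J \<subseteq> carrier R" by blast
      show "\<zero> \<in> ?J" using Xc additive_subgroup.zero_closed[OF ideal.axioms(1)[OF Pid]] by simp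
      fix u1 u2 assume u1: "u1 \<in> ?J" and u2: "u2 \<in> ?J"
      show "u1 \<oplus> u2 \<in> ?J"
      proof (intro CollectI conjI ballI)
        show "u1 \<oplus> u2 \<in> carrier R" using u1 u2 by simp
        fix z assume z: "z \<in> ?X"
        have "z \<otimes> (u1 \<oplus> u2) = z \<otimes> u1 \<oplus> z \<otimes> u2" using u1 u2 Xc[OF z] by (simp add: r_distr)
        thus "z \<otimes> (u1 \<oplus> u2) \<in> P" using u1 u2 z additive_subgroup.a_closed[OF ideal.axioms(1)[OF Pid]] by simp
      qed
    next
      fix u r assume u: "u \<in> ?J" and r: "r \<in> carrier R"
      show "r \<otimes> u \<in> ?J"
      proof (intro CollectI conjI ballI)
        show "r \<otimes> u \<in> carrier R" using u r by simp
        fix z assume z: "z \<in> ?X"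
        have "z \<otimes> (r \<otimes> u) = (z \<otimes> r) \<otimes> u" using u r Xc[OF z] by (simp add: m_assoc)
        thus "z \<otimes> (r \<otimes> u) \<in> P" using u ideal.I_r_closed[OF Xid z r] by simp
      qed
      show "u \<otimes> r \<in> ?J"
      proof (intro CollectI conjI ballI)
        show "u \<otimes> r \<in> carrier R" using u r by simp
        fix z assume z: "z \<in> ?X"
        have "z \<otimes> (u \<otimes> r) = (z \<otimes> u) \<otimes> r" using u r Xc[OF z] by (simp add: m_assoc)
        thus "z \<otimes> (u \<otimes> r) \<in> P" using u z ideal.I_r_closed[OF Pid _ r] by simp
      qed
    qed
    have "?X \<subseteq> P \<or> ?J \<subseteq> P" by (rule Spec_prime[OF P Xid Jid]) blast
    thus ?thesis
    proof
      assume "?X \<subseteq> P" thus ?thesis using PW by blast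
    next
      assume JP: "?J \<subseteq> P"
      show ?thesis
      proof
        fix x' assume x': "x' \<in> ?X"
        have "x' \<otimes> t \<otimes> foldr (\<otimes>) ys \<one> \<in> P" if ys: "length ys = k" "set ys \<subseteq> N" and t: "t \<in> carrier R" for ys t
        proof -
          have "x' \<otimes> t \<otimes> foldr (\<otimes>) ys \<one> \<in> ?J"
          proof (intro CollectI conjI ballI)
            show "x' \<otimes> t \<otimes> foldr (\<otimes>) ys \<one> \<in> carrier R" using Xc[OF x'] t fc[OF ys(2)] by simp
            fix z assume z: "z \<in> ?X"
            have "z \<otimes> x' \<otimes> t \<otimes> foldr (\<otimes>) ys \<one> \<in> P" using C1[OF _ x' ys t] XW z by blast
            thus "z \<otimes> (x' \<otimes> t \<otimes> foldr (\<otimes>) ys \<one>) \<in> P"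
              using Xc[OF z] Xc[OF x'] t fc[OF ys(2)] by (simp add: m_assoc)
          qed
          thus ?thesis using JP by blast
        qed
        thus "x' \<in> W k" unfolding Wmem using Xc[OF x'] by blast
      qed
    qed
  qed
  have "?X \<subseteq> W 0"
  proof (rule inc_induct[of 0 n])
    show "0 \<le> n" by simp
    show "?X \<subseteq> W n" using Wn Xc by blast
    fix k assume "?X \<subseteq> W (Suc k)" thus "?X \<subseteq> W k" using step by blast
  qed
  thus ?thesis using W0 by blast
qed

end


lemma subring_inter_ideal:
  assumes Sr: "ring S" and sub: "subring R S" and P: "ideal P S"
  shows "ideal (P \<inter> R) (S\<lparr>carrier := R\<rparr>)"
proof -
  interpret S: ring S by fact
  have R'r: "ring (S\<lparr>carrier := R\<rparr>)" using S.subring_is_ring[OF sub] .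
  show ?thesis
  proof (rule ring.ideal_by_closure[OF R'r])
    show "P \<inter> R \<subseteq> carrier (S\<lparr>carrier := R\<rparr>)" by simp
    show "\<zero>\<^bsub>S\<lparr>carrier := R\<rparr>\<^esub> \<in> P \<inter> R"
      using subringE(2)[OF sub] additive_subgroup.zero_closed[OF ideal.axioms(1)[OF P]] by simp
    fix a b assume "a \<in> P \<inter> R" "b \<in> P \<inter> R"
    thus "a \<oplus>\<^bsub>S\<lparr>carrier := R\<rparr>\<^esub> b \<in> P \<inter> R"
      using subringE(7)[OF sub] additive_subgroup.a_closed[OF ideal.axioms(1)[OF P]] by simp
  next
    fix a x assume a: "a \<in> P \<inter> R" and x: "x \<in> carrier (S\<lparr>carrier := R\<rparr>)"
    have xc: "x \<in> carrier S" using x subringE(1)[OF sub] by auto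
    show "x \<otimes>\<^bsub>S\<lparr>carrier := R\<rparr>\<^esub> a \<in> P \<inter> R"
      using a x xc subringE(6)[OF sub] ideal.I_l_closed[OF P] by simp
    show "a \<otimes>\<^bsub>S\<lparr>carrier := R\<rparr>\<^esub> x \<in> P \<inter> R"
      using a x xc subringE(6)[OF sub] ideal.I_r_closed[OF P] by simp
  qed
qed

lemma ext_prime_finite:
  assumes Sr: "ring S" and sub: "subring R S" and P: "P \<in> Spec S"
  shows "finite F \<Longrightarrow> (\<And>Q. Q \<in> F \<Longrightarrow> ideal Q (S\<lparr>carrier := R\<rparr>)) \<Longrightarrow>
     extS S (R \<inter> \<Inter>F) \<subseteq> P \<Longrightarrow> \<exists>Q\<in>F. extS S Q \<subseteq> P"
proof (induction F rule: finite_induct)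
  interpret S: ring S by fact
  have R'r: "ring (S\<lparr>carrier := R\<rparr>)" using S.subring_is_ring[OF sub] .
  have Rc: "R \<subseteq> carrier S" using subringE(1)[OF sub] .
  {
    case empty
    have "\<one>\<^bsub>S\<^esub> \<in> extS S R"
      unfolding S.extS_mem
    proof (intro conjI ballI)
      show "\<one>\<^bsub>S\<^esub> \<in> carrier S" by simp
      fix t assume t: "t \<in> carrier S"
      have "\<one>\<^bsub>S\<^esub> \<in> left_gen S R" using S.lgen_base[OF Rc subringE(3)[OF sub]] .
      hence "t \<otimes>\<^bsub>S\<^esub> \<one>\<^bsub>S\<^esub> \<in> left_gen S R" using S.lgen_lmult[OF Rc _ t] by blast
      thus "\<one>\<^bsub>S\<^esub> \<otimes>\<^bsub>S\<^esub> t \<in> left_gen S R" using t by simp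
    qed
    moreover have "extS S R \<subseteq> P" using empty by simp
    ultimately have "\<one>\<^bsub>S\<^esub> \<in> P" by (rule subsetD[rotated])
    thus ?case using S.Spec_ne[OF P] by blast
  next
    case (insert Q F)
    let ?K = "R \<inter> \<Inter>F"
    have Qid: "ideal Q (S\<lparr>carrier := R\<rparr>)" using insert by blast
    have Kid: "ideal ?K (S\<lparr>carrier := R\<rparr>)"
      using ring.ideal_Inter_carrier[OF R'r, of F] insert.prems(1) by simp
    have QR: "Q \<subseteq> R" using ideal.Icarr[OF Qid] by auto
    have KR: "?K \<subseteq> R" by blast
    have eq: "R \<inter> \<Inter>(insert Q F) = Q \<inter> ?K" using QR by blast
    have "extS S Q \<subseteq> P \<or> extS S ?K \<subseteq> P"
    proof (rule S.Spec_prime[OF P S.extS_ideal S.extS_ideal])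
      show "Q \<subseteq> carrier S" using QR Rc by blast
      show "?K \<subseteq> carrier S" using KR Rc by blast
      fix a b assume a: "a \<in> extS S Q" and b: "b \<in> extS S ?K"
      have "a \<otimes>\<^bsub>S\<^esub> b \<in> extS S (Q \<inter> ?K)"
      proof (rule S.ext_prod[OF _ _ _ _ a b])
        show "Q \<subseteq> carrier S" using QR Rc by blast
        show "?K \<subseteq> carrier S" using KR Rc by blast
        show "Q \<inter> ?K \<subseteq> carrier S" using QR Rc by blast
        fix q k assume q: "q \<in> Q" and k: "k \<in> ?K"
        have "q \<otimes>\<^bsub>S\<lparr>carrier := R\<rparr>\<^esub> k \<in> Q" using ideal.I_r_closed[OF Qid q] k by simp
        moreover have "q \<otimes>\<^bsub>S\<lparr>carrier := R\<rparr>\<^esub> k \<in> ?K" using ideal.I_l_closed[OF Kid k] q QR by auto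
        ultimately show "q \<otimes>\<^bsub>S\<^esub> k \<in> Q \<inter> ?K" by simp
      qed
      thus "a \<otimes>\<^bsub>S\<^esub> b \<in> P" using insert.prems(2) eq by auto
    qed
    thus ?case using insert by blast
  }
qed


theorem lemma3p13:
  fixes S :: "('a, 'b) ring_scheme" and R :: "'a set"
  assumes "ring S" and "subring R S"
    and "goldie_hyp (S\<lparr>carrier := R\<rparr>)" and "goldie_hyp S"
  shows "(\<forall>U V. zariski_closed S U \<longrightarrow> zariski_closed (S\<lparr>carrier := R\<rparr>) V \<longrightarrow>
            (lam S R U \<subseteq> V \<longleftrightarrow> U \<subseteq> rho S R V))
     \<longleftrightarrow> (\<forall>P \<in> Spec S. \<forall>Q \<in> Spec (S\<lparr>carrier := R\<rparr>).
            extS S Q \<subseteq> P \<longrightarrow> Q \<subseteq> prad (S\<lparr>carrier := R\<rparr>) (P \<inter> R))"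
proof -
  interpret S: ring S by fact
  have sub: "subring R S" by fact
  have R'r: "ring (S\<lparr>carrier := R\<rparr>)" using S.subring_is_ring[OF sub] .
  interpret R': ring "S\<lparr>carrier := R\<rparr>" by fact
  have Rc: "R \<subseteq> carrier S" using subringE(1)[OF sub] .
  have GR: "goldie_hyp (S\<lparr>carrier := R\<rparr>)" and GS: "goldie_hyp S" by fact+
  have SpecR_sub: "\<And>Q. Q \<in> Spec (S\<lparr>carrier := R\<rparr>) \<Longrightarrow> Q \<subseteq> R"
    using ideal.Icarr[OF R'.Spec_ideal] by fastforce
  have SpecS_sub: "\<And>P. P \<in> Spec S \<Longrightarrow> P \<subseteq> carrier S"
    using ideal.Icarr[OF S.Spec_ideal] by blast
  have IzV_prime: "Iz A (Vz A Q) = Q" if A: "ring A" and Q: "Q \<in> Spec A" for A :: "('a, 'b) ring_scheme" and Q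
  proof -
    have "Q \<subseteq> carrier A" using ideal.Icarr[OF ring.Spec_ideal[OF A Q]] by blast
    moreover have "Q \<in> Vz A Q" using Q unfolding Vz_def by blast
    ultimately show ?thesis unfolding Iz_def Vz_def by blast
  qed
  show ?thesis
  proof
    assume adj: "\<forall>U V. zariski_closed S U \<longrightarrow> zariski_closed (S\<lparr>carrier := R\<rparr>) V \<longrightarrow>
            (lam S R U \<subseteq> V \<longleftrightarrow> U \<subseteq> rho S R V)"
    show "\<forall>P \<in> Spec S. \<forall>Q \<in> Spec (S\<lparr>carrier := R\<rparr>).
            extS S Q \<subseteq> P \<longrightarrow> Q \<subseteq> prad (S\<lparr>carrier := R\<rparr>) (P \<inter> R)"
    proof (intro ballI impI)
      fix P Q assume P: "P \<in> Spec S" and Q: "Q \<in> Spec (S\<lparr>carrier := R\<rparr>)" and QP: "extS S Q \<subseteq> P"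
      let ?U = "Vz S P" and ?V = "Vz (S\<lparr>carrier := R\<rparr>) Q"
      have cU: "zariski_closed S ?U" unfolding zariski_closed_def using SpecS_sub[OF P] by blast
      have cV: "zariski_closed (S\<lparr>carrier := R\<rparr>) ?V" unfolding zariski_closed_def using SpecR_sub[OF Q] by auto
      have IU: "Iz S ?U = P" using IzV_prime[OF S.ring_axioms P] .
      have IV: "Iz (S\<lparr>carrier := R\<rparr>) ?V = Q" using IzV_prime[OF R'r Q] .
      have "?U \<subseteq> rho S R ?V" unfolding rho_def IV
      proof
        fix P' assume "P' \<in> ?U"
        thus "P' \<in> Vz S (extS S Q)" using QP unfolding Vz_def by blast
      qed
      hence "lam S R ?U \<subseteq> ?V" using adj cU cV by blast
      hence sub2: "Vz (S\<lparr>carrier := R\<rparr>) (P \<inter> R) \<subseteq> ?V" unfolding lam_def IU .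
      show "Q \<subseteq> prad (S\<lparr>carrier := R\<rparr>) (P \<inter> R)"
        unfolding prad_def Iz_def using sub2 SpecR_sub[OF Q] unfolding Vz_def by auto
    qed
  next
    assume cond: "\<forall>P \<in> Spec S. \<forall>Q \<in> Spec (S\<lparr>carrier := R\<rparr>).
            extS S Q \<subseteq> P \<longrightarrow> Q \<subseteq> prad (S\<lparr>carrier := R\<rparr>) (P \<inter> R)"
    show "\<forall>U V. zariski_closed S U \<longrightarrow> zariski_closed (S\<lparr>carrier := R\<rparr>) V \<longrightarrow>
            (lam S R U \<subseteq> V \<longleftrightarrow> U \<subseteq> rho S R V)"
    proof (intro allI impI)
      fix U V assume cU: "zariski_closed S U" and cV: "zariski_closed (S\<lparr>carrier := R\<rparr>) V"
      from cU obtain Y where Y: "Y \<subseteq> carrier S" "U = Vz S Y" unfolding zariski_closed_def by blast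
      from cV obtain Z where Z: "Z \<subseteq> R" "V = Vz (S\<lparr>carrier := R\<rparr>) Z" unfolding zariski_closed_def by auto
      define IV where "IV = Iz (S\<lparr>carrier := R\<rparr>) V"
      have IVR: "IV \<subseteq> R" unfolding IV_def Iz_def by simp
      have IVc: "IV \<subseteq> carrier S" using IVR Rc by blast
      have rhoV: "rho S R V = Vz S (extS S IV)" unfolding rho_def IV_def ..
      show "lam S R U \<subseteq> V \<longleftrightarrow> U \<subseteq> rho S R V"
      proof
        assume lU: "lam S R U \<subseteq> V"
        show "U \<subseteq> rho S R V"
        proof
          fix P assume PU: "P \<in> U"
          have P: "P \<in> Spec S" using PU Y(2) unfolding Vz_def by blast
          have Pid: "ideal P S" using S.Spec_ideal[OF P] .
          have PRid: "ideal (P \<inter> R) (S\<lparr>carrier := R\<rparr>)" using subring_inter_ideal[OF S.ring_axioms sub Pid] .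
          have "Iz S U \<subseteq> P" unfolding Iz_def using PU by blast
          hence "Vz (S\<lparr>carrier := R\<rparr>) (P \<inter> R) \<subseteq> lam S R U" unfolding lam_def Vz_def by blast
          hence "Vz (S\<lparr>carrier := R\<rparr>) (P \<inter> R) \<subseteq> V" using lU by blast
          hence IVsub: "IV \<subseteq> prad (S\<lparr>carrier := R\<rparr>) (P \<inter> R)"
            unfolding IV_def prad_def Iz_def by auto
          obtain n where n: "\<forall>ys. length ys = n \<longrightarrow> set ys \<subseteq> prad (S\<lparr>carrier := R\<rparr>) (P \<inter> R) \<longrightarrow>
              foldr (\<otimes>\<^bsub>S\<lparr>carrier := R\<rparr>\<^esub>) ys \<one>\<^bsub>S\<lparr>carrier := R\<rparr>\<^esub> \<in> P \<inter> R"
            using R'.goldie_nil[OF GR PRid] by blast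
          have pradR: "prad (S\<lparr>carrier := R\<rparr>) (P \<inter> R) \<subseteq> carrier S"
            using Rc unfolding prad_def Iz_def by auto
          have "extS S (prad (S\<lparr>carrier := R\<rparr>) (P \<inter> R)) \<subseteq> P"
          proof (rule S.ext_nil[OF P pradR])
            fix ys assume "length ys = n" "set ys \<subseteq> prad (S\<lparr>carrier := R\<rparr>) (P \<inter> R)"
            thus "foldr (\<otimes>\<^bsub>S\<^esub>) ys \<one>\<^bsub>S\<^esub> \<in> P" using n by auto
          qed
          hence "extS S IV \<subseteq> P" using S.extS_mono[OF IVsub] by blast
          thus "P \<in> rho S R V" unfolding rhoV Vz_def using P by blast
        qed
      next
        assume Ur: "U \<subseteq> rho S R V"
        show "lam S R U \<subseteq> V"
        proof
          fix Q'' assume Q''l: "Q'' \<in> lam S R U"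
          have Q'': "Q'' \<in> Spec (S\<lparr>carrier := R\<rparr>)" and Q''sup: "Iz S U \<inter> R \<subseteq> Q''"
            using Q''l unfolding lam_def Vz_def by auto
          define E where "E = extS S IV"
          have Eid: "ideal E S" unfolding E_def using S.extS_ideal[OF IVc] .
          obtain FS where FS: "finite FS" "FS \<subseteq> Spec S" "\<forall>P\<in>FS. E \<subseteq> P" "carrier S \<inter> \<Inter>FS \<subseteq> prad S E"
            using S.goldie_fin[OF GS Eid] by blast
          have "prad S E \<subseteq> Iz S U"
          proof -
            have "prad S E \<subseteq> P" if "P \<in> U" for P
            proof -
              have "P \<in> Vz S E" using Ur that rhoV unfolding E_def by blast
              thus ?thesis using S.prad_sub unfolding Vz_def by blast
            qed
            moreover have "prad S E \<subseteq> carrier S" unfolding prad_def Iz_def by blast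
            ultimately show ?thesis unfolding Iz_def by blast
          qed
          hence FSsub: "R \<inter> \<Inter>FS \<subseteq> Q''" using FS(4) Q''sup Rc by blast
          have "\<exists>I\<in>(\<lambda>P. P \<inter> R) ` FS. I \<subseteq> Q''"
          proof (rule R'.prime_finite_Inter[OF Q''])
            show "finite ((\<lambda>P. P \<inter> R) ` FS)" using FS(1) by simp
            fix I assume "I \<in> (\<lambda>P. P \<inter> R) ` FS"
            then obtain P where "P \<in> FS" "I = P \<inter> R" by blast
            thus "ideal I (S\<lparr>carrier := R\<rparr>)"
              using subring_inter_ideal[OF S.ring_axioms sub S.Spec_ideal] FS(2) by blast
          next
            show "carrier (S\<lparr>carrier := R\<rparr>) \<inter> \<Inter>((\<lambda>P. P \<inter> R) ` FS) \<subseteq> Q''"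
              using FSsub by auto
          qed
          then obtain P where P: "P \<in> FS" and PQ'': "P \<inter> R \<subseteq> Q''" by blast
          have PS: "P \<in> Spec S" using P FS(2) by blast
          have EP: "E \<subseteq> P" using P FS(3) by blast
          define J' where "J' = genideal (S\<lparr>carrier := R\<rparr>) Z"
          have J'id: "ideal J' (S\<lparr>carrier := R\<rparr>)" unfolding J'_def using R'.genideal_ideal Z(1) by simp
          have ZJ': "Z \<subseteq> J'" unfolding J'_def using R'.genideal_self Z(1) by simp
          have VJ: "Vz (S\<lparr>carrier := R\<rparr>) J' = V"
          proof
            show "Vz (S\<lparr>carrier := R\<rparr>) J' \<subseteq> V" unfolding Z(2) Vz_def using ZJ' by blast
            show "V \<subseteq> Vz (S\<lparr>carrier := R\<rparr>) J'"
            proof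
              fix Q assume "Q \<in> V"
              hence Q: "Q \<in> Spec (S\<lparr>carrier := R\<rparr>)" "Z \<subseteq> Q" unfolding Z(2) Vz_def by auto
              have "J' \<subseteq> Q" unfolding J'_def using R'.genideal_minimal[OF R'.Spec_ideal[OF Q(1)] Q(2)] .
              thus "Q \<in> Vz (S\<lparr>carrier := R\<rparr>) J'" using Q unfolding Vz_def by blast
            qed
          qed
          obtain FR where FR: "finite FR" "FR \<subseteq> Spec (S\<lparr>carrier := R\<rparr>)" "\<forall>Q\<in>FR. J' \<subseteq> Q"
              "carrier (S\<lparr>carrier := R\<rparr>) \<inter> \<Inter>FR \<subseteq> prad (S\<lparr>carrier := R\<rparr>) J'"
            using R'.goldie_fin[OF GR J'id] by blast
          have "prad (S\<lparr>carrier := R\<rparr>) J' = IV" unfolding prad_def IV_def VJ ..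
          hence "R \<inter> \<Inter>FR \<subseteq> IV" using FR(4) by simp
          hence "extS S (R \<inter> \<Inter>FR) \<subseteq> P" using S.extS_mono EP unfolding E_def by blast
          then obtain Q where Q: "Q \<in> FR" and QP: "extS S Q \<subseteq> P"
            using ext_prime_finite[OF S.ring_axioms sub PS FR(1)] FR(2) R'.Spec_ideal by blast
          have QS: "Q \<in> Spec (S\<lparr>carrier := R\<rparr>)" using Q FR(2) by blast
          have "Q \<subseteq> prad (S\<lparr>carrier := R\<rparr>) (P \<inter> R)" using cond PS QS QP by blast
          also have "\<dots> \<subseteq> Q''" using R'.prad_sub[OF Q'' PQ''] .
          finally have "Q \<subseteq> Q''" .
          moreover have "Z \<subseteq> Q" using ZJ' FR(3) Q by blast
          ultimately show "Q'' \<in> V" unfolding Z(2) Vz_def using Q'' by blast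
        qed
      qed
    qed
  qed
qed


end
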